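(* Let $p>1$ and identify $S^1$ with $[-\pi,\pi]$ with endpoints identified. Let $V\in L^\infty(S^1)$ and suppose there is a constant $m$ with $V\ge m>0$. For $\epsilon>0$ consider $\mathcal{L}_\epsilon=-\epsilon^2\frac{d^2}{dx^2}+V$ as a map $W^{2,p}(S^1)\to L^p(S^1)$. Then $\mathcal{L}_\epsilon$ is continuously invertible, and there is a constant $C$ (independent of $\epsilon$) such that for all sufficiently small $\epsilon>0$, $$\|\mathcal{L}_\epsilon^{-1}\|\le C\epsilon^{-4},$$ where the norm is the operator norm from $L^p(S^1)$ to $W^{2,p}(S^1)$. *)

theory Defs
  imports "HOL-Analysis.Analysis"
begin

text \<open>The circle S^1 is identified with [-pi,pi] (endpoints identified).
  Functions on S^1 are real functions whose values on [-pi,pi] matter;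
  the measure is Lebesgue measure on [-pi,pi].\<close>

abbreviation S1 :: "real measure" where
  "S1 \<equiv> lebesgue_on {-pi..pi}"

definition Lp :: "real \<Rightarrow> (real \<Rightarrow> real) \<Rightarrow> bool" where
  "Lp p f \<longleftrightarrow> f \<in> borel_measurable S1 \<and> integrable S1 (\<lambda>x. \<bar>f x\<bar> powr p)"

definition Lp_norm :: "real \<Rightarrow> (real \<Rightarrow> real) \<Rightarrow> real" where
  "Lp_norm p f = (\<integral>x. \<bar>f x\<bar> powr p \<partial>S1) powr (1 / p)"

definition Linf :: "(real \<Rightarrow> real) \<Rightarrow> bool" where
  "Linf V \<longleftrightarrow> V \<in> borel_measurable S1 \<and> (\<exists>B. AE x in S1. \<bar>V x\<bar> \<le> B)"

definition smooth_periodic :: "(real \<Rightarrow> real) \<Rightarrow> bool" where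
  "smooth_periodic \<phi> \<longleftrightarrow> (\<forall>n. ((deriv ^^ n) \<phi>) differentiable_on UNIV)
                          \<and> (\<forall>x. \<phi> (x + 2 * pi) = \<phi> x)"

definition weak_deriv :: "(real \<Rightarrow> real) \<Rightarrow> (real \<Rightarrow> real) \<Rightarrow> bool" where
  "weak_deriv f g \<longleftrightarrow> (\<forall>\<phi>. smooth_periodic \<phi> \<longrightarrow>
       (\<integral>x. f x * deriv \<phi> x \<partial>S1) = - (\<integral>x. g x * \<phi> x \<partial>S1))"

definition W2p :: "real \<Rightarrow> (real \<Rightarrow> real) \<Rightarrow> (real \<Rightarrow> real) \<Rightarrow> (real \<Rightarrow> real) \<Rightarrow> bool" where
  "W2p p u u1 u2 \<longleftrightarrow> Lp p u \<and> Lp p u1 \<and> Lp p u2 \<and> weak_deriv u u1 \<and> weak_deriv u1 u2"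

definition W2p_norm :: "real \<Rightarrow> (real \<Rightarrow> real) \<Rightarrow> (real \<Rightarrow> real) \<Rightarrow> (real \<Rightarrow> real) \<Rightarrow> real" where
  "W2p_norm p u u1 u2 = Lp_norm p u + Lp_norm p u1 + Lp_norm p u2"

definition Lop :: "real \<Rightarrow> (real \<Rightarrow> real) \<Rightarrow> (real \<Rightarrow> real) \<Rightarrow> (real \<Rightarrow> real) \<Rightarrow> real \<Rightarrow> real" where
  "Lop \<epsilon> V u u2 = (\<lambda>x. - (\<epsilon>\<^sup>2) * u2 x + V x * u x)"

end

theory Submission
  imports Defs
begin



lemma I_sets[simp]: "{-pi..pi::real} \<in> sets lebesgue" by simp

lemma space_S1[simp]: "space S1 = {-pi..pi}"
  by (simp add: space_restrict_space)

lemma measure_S1[simp]: "measure S1 {-pi..pi} = 2*pi"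
proof -
  have "measure S1 {-pi..pi} = measure lebesgue {-pi..pi}"
    by (simp add: measure_restrict_space)
  also have "\<dots> = 2*pi" by simp
  finally show ?thesis .
qed

lemma finite_measure_S1: "finite_measure S1"
  by (rule finite_measure_lebesgue_on) simp

interpretation S1fin: finite_measure S1 by (rule finite_measure_S1)

lemma integral_const_S1[simp]: "(\<integral>x. c \<partial>S1) = 2*pi*c"
  by (simp add: measure_S1)

lemma integrable_const_S1[simp]: "integrable S1 (\<lambda>x. c::real)"
  by simp

lemma cont_meas_S1: "continuous_on {-pi..pi} f \<Longrightarrow> f \<in> borel_measurable S1"
  by (rule continuous_imp_measurable_on_sets_lebesgue) auto

lemma id_meas_S1[measurable]: "(\<lambda>x. x) \<in> borel_measurable S1"
  by (rule cont_meas_S1) (rule continuous_on_id)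

lemma AE_S1_neq: "AE x in S1. x \<noteq> a"
proof -
  have "{a} \<in> null_sets lebesgue" by simp
  hence "AE x in lebesgue. x \<noteq> a" using AE_not_in by fastforce
  thus ?thesis by (subst AE_restrict_space_iff) (auto elim!: eventually_mono)
qed

lemma AE_S1_const: "(AE x in S1. P) \<Longrightarrow> P"
proof (rule ccontr)
  assume "AE x in S1. P" "\<not> P"
  hence "AE x in S1. False" by simp
  hence "emeasure S1 (space S1) = 0" by (metis ae_filter_eq_bot_iff trivial_limit_def)
  hence "measure S1 {-pi..pi} = 0" by (simp add: measure_def)
  thus False using measure_S1 by simp
qed

lemma AE_S1_I: "(\<And>x. x \<in> {-pi..pi} \<Longrightarrow> P x) \<Longrightarrow> AE x in S1. P x"
  by (rule AE_I2) auto

lemma integrable_S1_bound: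
  fixes h k :: "real \<Rightarrow> real"
  assumes "integrable S1 h" "k \<in> borel_measurable S1" "AE x in S1. \<bar>k x\<bar> \<le> \<bar>h x\<bar>"
  shows "integrable S1 k"
  by (rule Bochner_Integration.integrable_bound[OF assms(1,2)]) (use assms(3) in auto)

lemma integrable_S1_bounded:
  fixes k :: "real \<Rightarrow> real"
  assumes "k \<in> borel_measurable S1" "AE x in S1. \<bar>k x\<bar> \<le> c"
  shows "integrable S1 k"
  by (rule Bochner_Integration.integrable_bound[OF integrable_const_S1[of c] assms(1)]) (use assms(2) in \<open>auto elim!: eventually_mono\<close>)

lemma integrable_S1_cont: "continuous_on {-pi..pi} f \<Longrightarrow> integrable S1 (f::real\<Rightarrow>real)"
proof -
  assume c: "continuous_on {-pi..pi} f"
  obtain B where "\<forall>x\<in>{-pi..pi}. norm (f x) \<le> B"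
    using compact_imp_bounded[OF compact_continuous_image[OF c compact_Icc]]
    unfolding bounded_iff by auto
  thus ?thesis using c by (intro integrable_S1_bounded[of _ B] cont_meas_S1 AE_S1_I) auto
qed

lemma integral_S1_eq_Henstock:
  assumes "integrable S1 (f::real \<Rightarrow> real)"
  shows "(\<integral>x. f x \<partial>S1) = integral {-pi..pi} f"
  using assms by (rule lebesgue_integral_eq_integral) simp

lemma integrable_S1_integrable_on:
  assumes "integrable S1 (f::real \<Rightarrow> real)"
  shows "f integrable_on {-pi..pi}"
  using assms by (rule integrable_on_lebesgue_on) simp




lemma powr_subadd:
  fixes x y r :: real
  assumes "0 \<le> x" "0 \<le> y" "0 < r" "r \<le> 1"
  shows "(x + y) powr r \<le> x powr r + y powr r"
proof (cases "x + y = 0")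
  case True thus ?thesis using assms by auto
next
  case False
  hence s: "x + y > 0" using assms by auto
  have a: "x / (x+y) \<le> (x/(x+y)) powr r"
    using powr_mono'[of r 1 "x/(x+y)"] assms s by (simp add: divide_le_eq_1)
  have b: "y / (x+y) \<le> (y/(x+y)) powr r"
    using powr_mono'[of r 1 "y/(x+y)"] assms s by (simp add: divide_le_eq_1)
  have "1 = x/(x+y) + y/(x+y)" using s by (simp add: add_divide_distrib[symmetric])
  also have "\<dots> \<le> (x/(x+y)) powr r + (y/(x+y)) powr r" using a b by simp
  also have "\<dots> = (x powr r + y powr r) / (x+y) powr r"
    using assms s by (simp add: powr_divide add_divide_distrib)
  finally show ?thesis using s by (simp add: le_divide_eq)
qed

lemma Lp_integrable:
  assumes p: "p > 1" and "Lp p h"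
  shows "integrable S1 h"
proof -
  have m: "h \<in> borel_measurable S1" and i: "integrable S1 (\<lambda>x. \<bar>h x\<bar> powr p)"
    using assms unfolding Lp_def by auto
  have b: "\<bar>h x\<bar> \<le> \<bar>1 + \<bar>h x\<bar> powr p\<bar>" for x
  proof -
    have z: "0 \<le> \<bar>h x\<bar> powr p" by simp
    have "\<bar>h x\<bar> \<le> 1 + \<bar>h x\<bar> powr p"
    proof (cases "\<bar>h x\<bar> \<le> 1")
      case True thus ?thesis using z by linarith
    next
      case False
      hence "\<bar>h x\<bar> powr 1 \<le> \<bar>h x\<bar> powr p" using p by (intro powr_mono) auto
      thus ?thesis using False by simp
    qed
    thus ?thesis using z by linarith
  qed
  have i1: "integrable S1 (\<lambda>x. 1 + \<bar>h x\<bar> powr p)" using i by simp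
  show ?thesis
    by (rule integrable_S1_bound[OF i1 m]) (rule AE_I2, rule b)
qed

lemma Lp_norm_nonneg: "Lp_norm p h \<ge> 0"
  unfolding Lp_norm_def by simp

lemma Lp_norm_cong:
  assumes [measurable]: "h \<in> borel_measurable S1" "k \<in> borel_measurable S1"
  assumes e: "AE x in S1. h x = k x"
  shows "Lp_norm p h = Lp_norm p k"
proof -
  have "(\<integral>x. \<bar>h x\<bar> powr p \<partial>S1) = (\<integral>x. \<bar>k x\<bar> powr p \<partial>S1)"
    by (rule integral_cong_AE) (use e in \<open>auto elim!: eventually_mono\<close>)
  thus ?thesis unfolding Lp_norm_def by simp
qed

lemma Lp_L1_bound:
  assumes p: "p > 1" and h: "Lp p h"
  shows "(\<integral>x. \<bar>h x\<bar> \<partial>S1) \<le> (2*pi+1) * Lp_norm p h"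
proof -
  have m[measurable]: "h \<in> borel_measurable S1" and i: "integrable S1 (\<lambda>x. \<bar>h x\<bar> powr p)"
    using h unfolding Lp_def by auto
  have hi: "integrable S1 h" using Lp_integrable[OF p h] .
  define J where "J = (\<integral>x. \<bar>h x\<bar> powr p \<partial>S1)"
  define N where "N = Lp_norm p h"
  have J0: "J \<ge> 0" unfolding J_def by simp
  have NJ: "N = J powr (1/p)" unfolding N_def J_def Lp_norm_def ..
  show ?thesis
  proof (cases "J = 0")
    case True
    hence "AE x in S1. \<bar>h x\<bar> powr p = 0"
      using integral_nonneg_eq_0_iff_AE[OF i] unfolding J_def by auto
    hence "AE x in S1. \<bar>h x\<bar> = 0" by (auto elim!: eventually_mono)
    hence "(\<integral>x. \<bar>h x\<bar> \<partial>S1) = (\<integral>x. 0 \<partial>S1)" by (intro integral_cong_AE) auto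
    thus ?thesis using Lp_norm_nonneg[of p h] by simp
  next
    case False
    hence Jp: "J > 0" using J0 by simp
    hence Np: "N > 0" using NJ by simp
    have NpJ: "N powr p = J" using NJ Jp p by (simp add: powr_powr)
    have pt: "\<bar>h x\<bar> \<le> N + \<bar>h x\<bar> powr p / N powr (p - 1)" for x
    proof (cases "\<bar>h x\<bar> \<le> N")
      case True
      have "0 \<le> \<bar>h x\<bar> powr p / N powr (p - 1)" by simp
      thus ?thesis using True by linarith
    next
      case False
      hence hp: "\<bar>h x\<bar> > 0" using Np by simp
      have "1 \<le> (\<bar>h x\<bar> / N) powr (p - 1)"
        using False Np p by (intro ge_one_powr_ge_zero) (auto simp: le_divide_eq)
      hence "\<bar>h x\<bar> \<le> \<bar>h x\<bar> * (\<bar>h x\<bar> / N) powr (p - 1)" using hp by simp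
      also have "\<dots> = \<bar>h x\<bar> powr p / N powr (p - 1)"
        using hp Np by (simp add: powr_divide powr_diff)
      finally show ?thesis using Np by linarith
    qed
    have "(\<integral>x. \<bar>h x\<bar> \<partial>S1) \<le> (\<integral>x. N + \<bar>h x\<bar> powr p / N powr (p - 1) \<partial>S1)"
      using pt hi i by (intro integral_mono) auto
    also have "\<dots> = 2*pi*N + J / N powr (p - 1)"
      using i unfolding J_def by (simp add: integral_add)
    also have "J / N powr (p - 1) = N powr p / N powr (p - 1)" using NpJ by simp
    also have "\<dots> = N powr (p - (p - 1))" by (simp add: powr_diff)
    also have "\<dots> = N" using Np by simp
    finally have "(\<integral>x. \<bar>h x\<bar> \<partial>S1) \<le> 2*pi*N + N" .
    thus ?thesis unfolding N_def by (simp add: distrib_right)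
  qed
qed

lemma Lp_bounded:
  assumes p: "p > 1" and m: "h \<in> borel_measurable S1" and c: "c \<ge> 0"
    and b: "AE x in S1. \<bar>h x\<bar> \<le> c"
  shows "Lp p h" "Lp_norm p h \<le> (2*pi) powr (1/p) * c"
proof -
  have mm[measurable]: "(\<lambda>x. \<bar>h x\<bar> powr p) \<in> borel_measurable S1"
    using m by (rule measurable_abs_powr)
  have bb: "AE x in S1. \<bar>\<bar>h x\<bar> powr p\<bar> \<le> c powr p"
    using b p by (auto elim!: eventually_mono intro!: powr_mono2)
  have i: "integrable S1 (\<lambda>x. \<bar>h x\<bar> powr p)"
    by (rule integrable_S1_bounded[OF mm bb])
  thus "Lp p h" using m unfolding Lp_def by simp
  have "(\<integral>x. \<bar>h x\<bar> powr p \<partial>S1) \<le> (\<integral>x. c powr p \<partial>S1)"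
    using bb i by (intro integral_mono_AE) (auto elim!: eventually_mono)
  hence "(\<integral>x. \<bar>h x\<bar> powr p \<partial>S1) powr (1/p) \<le> (2*pi * c powr p) powr (1/p)"
    using p by (intro powr_mono2) auto
  also have "\<dots> = (2*pi) powr (1/p) * c"
    using p c by (simp add: powr_mult powr_powr)
  finally show "Lp_norm p h \<le> (2*pi) powr (1/p) * c" unfolding Lp_norm_def .
qed

lemma Lp_weak_minkowski:
  assumes p: "p > 1" and a: "Lp p a" and m: "h \<in> borel_measurable S1"
    and al: "\<alpha> \<ge> 0" and c: "c \<ge> 0"
    and b: "AE x in S1. \<bar>h x\<bar> \<le> \<alpha> * \<bar>a x\<bar> + c"
  shows "Lp p h" "Lp_norm p h \<le> 2 * (\<alpha> * Lp_norm p a + (2*pi) powr (1/p) * c)"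
proof -
  have am[measurable]: "a \<in> borel_measurable S1" and ai: "integrable S1 (\<lambda>x. \<bar>a x\<bar> powr p)"
    using a unfolding Lp_def by auto
  have mm[measurable]: "(\<lambda>x. \<bar>h x\<bar> powr p) \<in> borel_measurable S1"
    using m by (rule measurable_abs_powr)
  define Ja where "Ja = (\<integral>x. \<bar>a x\<bar> powr p \<partial>S1)"
  have Ja0: "Ja \<ge> 0" unfolding Ja_def by simp
  have pt: "(s + t) powr p \<le> 2 powr p * (s powr p + t powr p)" if "s \<ge> 0" "t \<ge> 0" for s t :: real
  proof -
    have "(s + t) powr p \<le> (2 * max s t) powr p" using that p by (intro powr_mono2) auto
    also have "\<dots> = 2 powr p * (max s t) powr p" by (simp add: powr_mult)
    also have "(max s t) powr p \<le> s powr p + t powr p"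
      by (cases "s \<le> t") (auto simp: max_def)
    finally show ?thesis by simp
  qed
  have bb: "AE x in S1. \<bar>\<bar>h x\<bar> powr p\<bar> \<le> 2 powr p * (\<alpha> powr p * \<bar>a x\<bar> powr p + c powr p)"
    using b
  proof (elim eventually_mono)
    fix x assume hx: "\<bar>h x\<bar> \<le> \<alpha> * \<bar>a x\<bar> + c"
    have "\<bar>h x\<bar> powr p \<le> (\<alpha> * \<bar>a x\<bar> + c) powr p" using hx p by (intro powr_mono2) auto
    also have "\<dots> \<le> 2 powr p * ((\<alpha> * \<bar>a x\<bar>) powr p + c powr p)" using al c by (intro pt) auto
    finally show "\<bar>\<bar>h x\<bar> powr p\<bar> \<le> 2 powr p * (\<alpha> powr p * \<bar>a x\<bar> powr p + c powr p)"
      using al by (simp add: powr_mult)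
  qed
  have ri: "integrable S1 (\<lambda>x. 2 powr p * (\<alpha> powr p * \<bar>a x\<bar> powr p + c powr p))"
    using ai by simp
  have i: "integrable S1 (\<lambda>x. \<bar>h x\<bar> powr p)"
    by (rule Bochner_Integration.integrable_bound[OF ri mm]) (use bb in \<open>auto elim!: eventually_mono\<close>)
  thus "Lp p h" using m unfolding Lp_def by simp
  have "(\<integral>x. \<bar>h x\<bar> powr p \<partial>S1) \<le> (\<integral>x. 2 powr p * (\<alpha> powr p * \<bar>a x\<bar> powr p + c powr p) \<partial>S1)"
    using bb i ri by (intro integral_mono_AE) (auto elim!: eventually_mono)
  also have "\<dots> = 2 powr p * (\<alpha> powr p * Ja + 2*pi* c powr p)"
    using ai unfolding Ja_def by (simp add: integral_add)
  finally have le: "(\<integral>x. \<bar>h x\<bar> powr p \<partial>S1) \<le> 2 powr p * (\<alpha> powr p * Ja + 2*pi* c powr p)" .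
  have "Lp_norm p h \<le> (2 powr p * (\<alpha> powr p * Ja + 2*pi* c powr p)) powr (1/p)"
    unfolding Lp_norm_def using le p by (intro powr_mono2) auto
  also have "\<dots> = 2 * (\<alpha> powr p * Ja + 2*pi* c powr p) powr (1/p)"
    using p Ja0 al c by (simp add: powr_mult powr_powr)
  also have "(\<alpha> powr p * Ja + 2*pi* c powr p) powr (1/p) \<le> (\<alpha> powr p * Ja) powr (1/p) + (2*pi* c powr p) powr (1/p)"
    using p Ja0 al c by (intro powr_subadd) auto
  also have "(\<alpha> powr p * Ja) powr (1/p) = \<alpha> * Lp_norm p a"
    using p Ja0 al unfolding Lp_norm_def Ja_def by (simp add: powr_mult powr_powr)
  also have "(2*pi* c powr p) powr (1/p) = (2*pi) powr (1/p) * c"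
    using p c by (simp add: powr_mult powr_powr)
  finally show "Lp_norm p h \<le> 2 * (\<alpha> * Lp_norm p a + (2*pi) powr (1/p) * c)" by simp
qed




definition prim :: "(real \<Rightarrow> real) \<Rightarrow> real \<Rightarrow> real" where
  "prim h x = integral {-pi..x} h"

lemma prim_integrable_on:
  assumes "integrable S1 (h::real\<Rightarrow>real)" "x \<le> pi"
  shows "h integrable_on {-pi..x}"
  using integrable_on_subinterval[OF integrable_S1_integrable_on[OF assms(1)]] assms(2) by auto

lemma prim_cont:
  assumes "integrable S1 (h::real\<Rightarrow>real)"
  shows "continuous_on {-pi..pi} (prim h)"
  unfolding prim_def using indefinite_integral_continuous_1[OF integrable_S1_integrable_on[OF assms]] .

lemma prim_meas[measurable]:
  assumes "integrable S1 (h::real\<Rightarrow>real)"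
  shows "prim h \<in> borel_measurable S1"
  by (rule cont_meas_S1[OF prim_cont[OF assms]])

lemma integrable_S1_ind_mult:
  assumes "integrable S1 (h::real\<Rightarrow>real)"
  shows "integrable S1 (\<lambda>t. indicator {..x} t * h t)"
proof -
  have [measurable]: "h \<in> borel_measurable S1" using assms by simp
  show ?thesis
    by (rule integrable_S1_bound[OF assms]) (auto simp: indicator_def)
qed

lemma prim_eq_L:
  assumes h: "integrable S1 (h::real\<Rightarrow>real)" and x: "x \<in> {-pi..pi}"
  shows "prim h x = (\<integral>t. indicator {..x} t * h t \<partial>S1)"
proof -
  have "(\<integral>t. indicator {..x} t * h t \<partial>S1) = integral {-pi..pi} (\<lambda>t. indicator {..x} t * h t)"
    by (rule integral_S1_eq_Henstock[OF integrable_S1_ind_mult[OF h]])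
  also have "\<dots> = integral {-pi..pi} (\<lambda>t. if t \<in> {..x} then h t else 0)"
    by (rule integral_cong) (auto simp: indicator_def)
  also have "\<dots> = integral ({..x} \<inter> {-pi..pi}) h" by (rule integral_restrict_Int)
  also have "{..x} \<inter> {-pi..pi} = {-pi..x}" using x by auto
  finally show ?thesis unfolding prim_def by simp
qed

lemma prim_bound:
  assumes h: "integrable S1 (h::real\<Rightarrow>real)" and x: "x \<in> {-pi..pi}"
  shows "\<bar>prim h x\<bar> \<le> (\<integral>t. \<bar>h t\<bar> \<partial>S1)"
proof -
  have "\<bar>prim h x\<bar> = \<bar>\<integral>t. indicator {..x} t * h t \<partial>S1\<bar>" using prim_eq_L[OF h x] by simp
  also have "\<dots> \<le> (\<integral>t. \<bar>indicator {..x} t * h t\<bar> \<partial>S1)"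
    by (rule integral_abs_bound)
  also have "\<dots> \<le> (\<integral>t. \<bar>h t\<bar> \<partial>S1)"
    using integrable_S1_ind_mult[OF h] h
    by (intro integral_mono) (auto simp: indicator_def)
  finally show ?thesis .
qed

lemma prim_diff_bound:
  assumes h: "integrable S1 (h::real\<Rightarrow>real)" and x: "x \<in> {-pi..pi}" and y: "y \<in> {-pi..pi}"
  shows "\<bar>prim h x - prim h y\<bar> \<le> (\<integral>t. \<bar>h t\<bar> \<partial>S1)"
proof -
  have hh[measurable]: "h \<in> borel_measurable S1" using h by simp
  have "prim h x - prim h y = (\<integral>t. (indicator {..x} t - indicator {..y} t) * h t \<partial>S1)"
    using prim_eq_L[OF h x] prim_eq_L[OF h y] integrable_S1_ind_mult[OF h]
    by (simp add: left_diff_distrib)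
  also have "\<bar>\<dots>\<bar> \<le> (\<integral>t. \<bar>(indicator {..x} t - indicator {..y} t) * h t\<bar> \<partial>S1)"
    by (rule integral_abs_bound)
  also have "\<dots> \<le> (\<integral>t. \<bar>h t\<bar> \<partial>S1)"
  proof (rule integral_mono)
    show "integrable S1 (\<lambda>t. \<bar>(indicator {..x} t - indicator {..y} t) * h t\<bar>)"
      by (intro integrable_abs integrable_S1_bound[OF h]) (auto simp: indicator_def)
  qed (use h in \<open>auto simp: indicator_def\<close>)
  finally show ?thesis .
qed

lemma prim_start[simp]: "prim h (-pi) = 0"
  unfolding prim_def by simp

lemma prim_end:
  assumes "integrable S1 (h::real\<Rightarrow>real)"
  shows "prim h pi = (\<integral>t. h t \<partial>S1)"
  unfolding prim_def using integral_S1_eq_Henstock[OF assms] by simp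

lemma prim_cong:
  assumes h: "integrable S1 (h::real\<Rightarrow>real)" and k: "integrable S1 k" and e: "AE t in S1. h t = k t"
    and x: "x \<in> {-pi..pi}"
  shows "prim h x = prim k x"
  unfolding prim_eq_L[OF h x] prim_eq_L[OF k x]
  by (rule integral_cong_AE) (use h k e in \<open>auto elim!: eventually_mono\<close>)

lemma prim_add:
  assumes h: "integrable S1 (h::real\<Rightarrow>real)" and k: "integrable S1 k" and x: "x \<le> pi"
  shows "prim (\<lambda>t. h t + k t) x = prim h x + prim k x"
  unfolding prim_def using prim_integrable_on[OF h x] prim_integrable_on[OF k x]
  by (rule integral_add)

lemma prim_diff:
  assumes h: "integrable S1 (h::real\<Rightarrow>real)" and k: "integrable S1 k" and x: "x \<le> pi"
  shows "prim (\<lambda>t. h t - k t) x = prim h x - prim k x"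
  unfolding prim_def using prim_integrable_on[OF h x] prim_integrable_on[OF k x]
  by (rule integral_diff)

lemma prim_cmult: "prim (\<lambda>t. c * h t) x = c * prim h x"
  unfolding prim_def by simp

lemma prim_const: "x \<ge> -pi \<Longrightarrow> prim (\<lambda>t. c) x = c * (x + pi)"
  unfolding prim_def by simp

lemma prim_ge_bound:
  assumes h: "integrable S1 (h::real\<Rightarrow>real)" and x: "x \<in> {-pi..pi}"
    and b: "AE t in S1. \<bar>h t\<bar> \<le> b t" and bc: "continuous_on {-pi..pi} b"
  shows "\<bar>prim h x\<bar> \<le> integral {-pi..x} b"
proof -
  have hh[measurable]: "h \<in> borel_measurable S1" using h by simp
  have bi: "integrable S1 b" by (rule integrable_S1_cont[OF bc])
  have "\<bar>prim h x\<bar> = \<bar>\<integral>t. indicator {..x} t * h t \<partial>S1\<bar>" using prim_eq_L[OF h x] by simp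
  also have "\<dots> \<le> (\<integral>t. \<bar>indicator {..x} t * h t\<bar> \<partial>S1)"
    by (rule integral_abs_bound)
  also have "\<dots> \<le> (\<integral>t. indicator {..x} t * b t \<partial>S1)"
    using integrable_S1_ind_mult[OF h] integrable_S1_ind_mult[OF bi] b
    by (intro integral_mono_AE) (auto simp: indicator_def elim!: eventually_mono)
  also have "\<dots> = prim b x" using prim_eq_L[OF bi x] by simp
  finally show ?thesis unfolding prim_def .
qed




interpretation S1pair: pair_sigma_finite S1 S1
  by (simp add: pair_sigma_finite_def S1fin.sigma_finite_measure_axioms)

lemma prim_eq_compl:
  assumes h: "integrable S1 (h::real\<Rightarrow>real)" and x: "x \<in> {-pi..pi}"
  shows "prim h x = (\<integral>t. h t \<partial>S1) - (\<integral>t. (if x \<le> t then h t else 0) \<partial>S1)"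
proof -
  have hm[measurable]: "h \<in> borel_measurable S1" using h by simp
  have i2: "integrable S1 (\<lambda>t. if x \<le> t then h t else 0)"
    by (rule integrable_S1_bound[OF h]) auto
  have "(\<integral>t. indicator {..x} t * h t \<partial>S1) + (\<integral>t. (if x \<le> t then h t else 0) \<partial>S1)
        = (\<integral>t. indicator {..x} t * h t + (if x \<le> t then h t else 0) \<partial>S1)"
    using integrable_S1_ind_mult[OF h] i2 by simp
  also have "\<dots> = (\<integral>t. h t \<partial>S1)"
    by (rule integral_cong_AE) (use AE_S1_neq[of x] in \<open>auto simp: indicator_def elim!: eventually_mono\<close>)
  finally show ?thesis using prim_eq_L[OF h x] by simp
qed

lemma product_lemma:
  assumes g: "integrable S1 (g::real\<Rightarrow>real)" and h: "integrable S1 (h::real\<Rightarrow>real)"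
  shows "(\<integral>x. g x * prim h x \<partial>S1) + (\<integral>x. prim g x * h x \<partial>S1)
         = (\<integral>x. g x \<partial>S1) * (\<integral>x. h x \<partial>S1)"
proof -
  have gm[measurable]: "g \<in> borel_measurable S1" using g by simp
  have hm[measurable]: "h \<in> borel_measurable S1" using h by simp
  define f where "f = (\<lambda>x t. g x * (if x \<le> t then h t else 0))"
  have fm[measurable]: "case_prod f \<in> borel_measurable (S1 \<Otimes>\<^sub>M S1)"
    unfolding f_def by measurable
  have inner: "(\<integral>t. norm (f x t) \<partial>S1) = \<bar>g x\<bar> * (\<integral>t. (if x \<le> t then \<bar>h t\<bar> else 0) \<partial>S1)" for x
  proof -
    have "(\<lambda>t. norm (f x t)) = (\<lambda>t. \<bar>g x\<bar> * (if x \<le> t then \<bar>h t\<bar> else 0))"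
      by (auto simp: f_def abs_mult)
    thus ?thesis by simp
  qed
  have ib: "integrable S1 (\<lambda>t. (if x \<le> t then \<bar>h t\<bar> else 0))" for x
    by (rule integrable_S1_bound[OF h]) auto
  have inner_le: "(\<integral>t. (if x \<le> t then \<bar>h t\<bar> else 0) \<partial>S1) \<le> (\<integral>t. \<bar>h t\<bar> \<partial>S1)" for x
    using ib h by (intro integral_mono) auto
  have inner_ge: "(\<integral>t. (if x \<le> t then \<bar>h t\<bar> else 0) \<partial>S1) \<ge> 0" for x
    by (rule integral_nonneg_AE) auto
  have int_f: "integrable (S1 \<Otimes>\<^sub>M S1) (case_prod f)"
  proof (rule S1pair.Fubini_integrable)
    show "case_prod f \<in> borel_measurable (S1 \<Otimes>\<^sub>M S1)" by (rule fm)
    have m1: "(\<lambda>x. \<integral>t. norm (case_prod f (x, t)) \<partial>S1) \<in> borel_measurable S1"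
      by measurable
    show "integrable S1 (\<lambda>x. \<integral>t. norm (case_prod f (x, t)) \<partial>S1)"
    proof (rule integrable_S1_bound[of "\<lambda>x. g x * (\<integral>t. \<bar>h t\<bar> \<partial>S1)"])
      show "integrable S1 (\<lambda>x. g x * (\<integral>t. \<bar>h t\<bar> \<partial>S1))" using g by simp
      show "(\<lambda>x. \<integral>t. norm (case_prod f (x, t)) \<partial>S1) \<in> borel_measurable S1" using m1 .
      show "AE x in S1. \<bar>\<integral>t. norm (case_prod f (x, t)) \<partial>S1\<bar> \<le> \<bar>g x * (\<integral>t. \<bar>h t\<bar> \<partial>S1)\<bar>"
      proof (rule AE_I2)
        fix x
        have "\<bar>\<integral>t. norm (case_prod f (x, t)) \<partial>S1\<bar> = \<bar>g x\<bar> * (\<integral>t. (if x \<le> t then \<bar>h t\<bar> else 0) \<partial>S1)"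
          using inner[of x] inner_ge[of x] by (simp add: abs_mult)
        also have "\<dots> \<le> \<bar>g x\<bar> * (\<integral>t. \<bar>h t\<bar> \<partial>S1)"
          using inner_le[of x] by (intro mult_left_mono) auto
        finally show "\<bar>\<integral>t. norm (case_prod f (x, t)) \<partial>S1\<bar> \<le> \<bar>g x * (\<integral>t. \<bar>h t\<bar> \<partial>S1)\<bar>"
          by (simp add: abs_mult)
      qed
    qed
    show "AE x in S1. integrable S1 (\<lambda>t. case_prod f (x, t))"
    proof (rule AE_I2)
      fix x
      have "integrable S1 (\<lambda>t. (if x \<le> t then h t else 0))"
        by (rule integrable_S1_bound[OF h]) auto
      thus "integrable S1 (\<lambda>t. case_prod f (x, t))" unfolding f_def by simp
    qed
  qed
  have fub: "(\<integral>t. (\<integral>x. f x t \<partial>S1) \<partial>S1) = (\<integral>x. (\<integral>t. f x t \<partial>S1) \<partial>S1)"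
    by (rule S1pair.Fubini_integral[OF int_f])
  have lhs1: "(\<integral>x. g x * prim h x \<partial>S1)
        = (\<integral>x. g x * (\<integral>t. h t \<partial>S1) - (\<integral>t. f x t \<partial>S1) \<partial>S1)"
  proof (rule integral_cong_AE)
    show "AE x in S1. g x * prim h x = g x * (\<integral>t. h t \<partial>S1) - (\<integral>t. f x t \<partial>S1)"
    proof (rule AE_S1_I)
      fix x assume x: "x \<in> {-pi..pi}"
      show "g x * prim h x = g x * (\<integral>t. h t \<partial>S1) - (\<integral>t. f x t \<partial>S1)"
        unfolding prim_eq_compl[OF h x] f_def by (simp add: right_diff_distrib)
    qed
  qed (use h in auto)
  have ifx: "integrable S1 (\<lambda>x. \<integral>t. f x t \<partial>S1)"
    using S1pair.integrable_fst'[OF int_f] by simp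
  have rhs1: "(\<integral>x. prim g x * h x \<partial>S1) = (\<integral>t. (\<integral>x. f x t \<partial>S1) \<partial>S1)"
  proof (rule integral_cong_AE)
    show "AE t in S1. prim g t * h t = (\<integral>x. f x t \<partial>S1)"
    proof (rule AE_S1_I)
      fix t assume t: "t \<in> {-pi..pi}"
      have "(\<lambda>x. f x t) = (\<lambda>x. (indicator {..t} x * g x) * h t)"
        by (auto simp: f_def indicator_def)
      hence "(\<integral>x. f x t \<partial>S1) = (\<integral>x. indicator {..t} x * g x \<partial>S1) * h t"
        by simp
      thus "prim g t * h t = (\<integral>x. f x t \<partial>S1)" using prim_eq_L[OF g t] by simp
    qed
  qed (use g h in auto)
  have "(\<integral>x. g x * prim h x \<partial>S1) + (\<integral>x. prim g x * h x \<partial>S1)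
      = (\<integral>x. g x * (\<integral>t. h t \<partial>S1) \<partial>S1) - (\<integral>x. (\<integral>t. f x t \<partial>S1) \<partial>S1) + (\<integral>x. (\<integral>t. f x t \<partial>S1) \<partial>S1)"
    unfolding lhs1 rhs1 fub using g ifx by simp
  also have "\<dots> = (\<integral>x. g x \<partial>S1) * (\<integral>x. h x \<partial>S1)" by simp
  finally show ?thesis .
qed




lemma integrable_S1_mult_cont:
  assumes g: "integrable S1 (g::real\<Rightarrow>real)" and k: "continuous_on {-pi..pi} k"
  shows "integrable S1 (\<lambda>x. g x * k x)"
proof -
  obtain B where B: "\<forall>x\<in>{-pi..pi}. \<bar>k x\<bar> \<le> B"
    using compact_imp_bounded[OF compact_continuous_image[OF k compact_Icc]]
    unfolding bounded_iff by auto
  have [measurable]: "g \<in> borel_measurable S1" using g by simp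
  have [measurable]: "k \<in> borel_measurable S1" by (rule cont_meas_S1[OF k])
  show ?thesis
  proof (rule integrable_S1_bound[of "\<lambda>x. B * g x"])
    show "integrable S1 (\<lambda>x. B * g x)" using g by simp
    show "AE x in S1. \<bar>g x * k x\<bar> \<le> \<bar>B * g x\<bar>"
    proof (rule AE_S1_I)
      fix x assume x: "x \<in> {-pi..pi}"
      have "\<bar>g x * k x\<bar> = \<bar>g x\<bar> * \<bar>k x\<bar>" by (simp add: abs_mult)
      also have "\<dots> \<le> \<bar>g x\<bar> * B" using B x by (intro mult_left_mono) auto
      also have "\<dots> \<le> \<bar>g x\<bar> * \<bar>B\<bar>" by (rule mult_left_mono) auto
      also have "\<dots> = \<bar>B * g x\<bar>" by (simp add: abs_mult mult.commute)
      finally show "\<bar>g x * k x\<bar> \<le> \<bar>B * g x\<bar>" .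
    qed
  qed measurable
qed

lemma integrable_S1_cont_mult:
  assumes g: "integrable S1 (g::real\<Rightarrow>real)" and k: "continuous_on {-pi..pi} k"
  shows "integrable S1 (\<lambda>x. k x * g x)"
  using integrable_S1_mult_cont[OF g k] by (simp add: mult.commute)

lemma smooth_deriv:
  assumes "smooth_periodic \<phi>"
  shows "\<And>x. (\<phi> has_real_derivative deriv \<phi> x) (at x)"
    and "continuous_on UNIV \<phi>" "continuous_on UNIV (deriv \<phi>)"
    and "\<phi> (x + 2*pi) = \<phi> x"
proof -
  have d0: "\<phi> differentiable_on UNIV" using assms unfolding smooth_periodic_def
    by (metis funpow_0)
  have "(deriv ^^ 1) \<phi> differentiable_on UNIV" using assms unfolding smooth_periodic_def
    by blast
  hence d1: "(deriv \<phi>) differentiable_on UNIV" by simp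
  show "(\<phi> has_real_derivative deriv \<phi> x) (at x)" for x
    using d0 by (simp add: DERIV_deriv_iff_real_differentiable differentiable_on_def)
  show "continuous_on UNIV \<phi>" using d0 by (rule differentiable_imp_continuous_on)
  show "continuous_on UNIV (deriv \<phi>)" using d1 by (rule differentiable_imp_continuous_on)
  show "\<phi> (x + 2*pi) = \<phi> x" using assms unfolding smooth_periodic_def by auto
qed

lemma smooth_prim:
  assumes s: "smooth_periodic \<phi>" and x: "x \<in> {-pi..pi}"
  shows "prim (deriv \<phi>) x = \<phi> x - \<phi> (-pi)"
proof -
  have "((deriv \<phi>) has_integral (\<phi> x - \<phi> (-pi))) {-pi..x}"
    using x smooth_deriv(1)[OF s]
    by (intro fundamental_theorem_of_calculus)
       (auto simp: has_real_derivative_iff_has_vector_derivative[symmetric]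
             intro: has_field_derivative_at_within)
  thus ?thesis unfolding prim_def by (rule integral_unique)
qed

lemma smooth_integrable:
  assumes s: "smooth_periodic \<phi>"
  shows "integrable S1 (deriv \<phi>)" "integrable S1 \<phi>"
    "continuous_on {-pi..pi} \<phi>" "continuous_on {-pi..pi} (deriv \<phi>)"
proof -
  show c1: "continuous_on {-pi..pi} \<phi>" using smooth_deriv(2)[OF s] continuous_on_subset by blast
  show c2: "continuous_on {-pi..pi} (deriv \<phi>)" using smooth_deriv(3)[OF s] continuous_on_subset by blast
  show "integrable S1 (deriv \<phi>)" by (rule integrable_S1_cont[OF c2])
  show "integrable S1 \<phi>" by (rule integrable_S1_cont[OF c1])
qed

lemma smooth_int_deriv:
  assumes s: "smooth_periodic \<phi>"
  shows "(\<integral>x. deriv \<phi> x \<partial>S1) = 0"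
proof -
  have "(\<integral>x. deriv \<phi> x \<partial>S1) = prim (deriv \<phi>) pi"
    using prim_end[OF smooth_integrable(1)[OF s]] by simp
  also have "\<dots> = \<phi> pi - \<phi> (-pi)" using smooth_prim[OF s, of pi] by simp
  also have "\<phi> pi = \<phi> (-pi)" using smooth_deriv(4)[OF s, of "-pi"] by simp
  finally show ?thesis by simp
qed

lemma prim_pair_smooth:
  assumes g: "integrable S1 (g::real\<Rightarrow>real)" and g0: "(\<integral>x. g x \<partial>S1) = 0"
    and s: "smooth_periodic \<phi>"
  shows "(\<integral>x. prim g x * deriv \<phi> x \<partial>S1) = - (\<integral>x. g x * \<phi> x \<partial>S1)"
proof -
  have di: "integrable S1 (deriv \<phi>)" by (rule smooth_integrable(1)[OF s])
  have pl: "(\<integral>x. g x * prim (deriv \<phi>) x \<partial>S1) + (\<integral>x. prim g x * deriv \<phi> x \<partial>S1) = 0"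
    using product_lemma[OF g di] g0 by simp
  have "(\<integral>x. g x * prim (deriv \<phi>) x \<partial>S1) = (\<integral>x. g x * \<phi> x - \<phi> (-pi) * g x \<partial>S1)"
    by (rule Bochner_Integration.integral_cong) (auto simp: smooth_prim[OF s] algebra_simps)
  also have "\<dots> = (\<integral>x. g x * \<phi> x \<partial>S1)"
    using integrable_S1_mult_cont[OF g smooth_integrable(3)[OF s]] g g0 by simp
  finally show ?thesis using pl by linarith
qed

lemma weak_deriv_of_prim:
  assumes g: "integrable S1 (g::real\<Rightarrow>real)" and g0: "(\<integral>x. g x \<partial>S1) = 0"
    and F: "\<And>x. x \<in> {-pi..pi} \<Longrightarrow> F x = c + prim g x"
  shows "weak_deriv F g"
  unfolding weak_deriv_def
proof (intro allI impI)
  fix \<phi> assume s: "smooth_periodic \<phi>"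
  have di: "integrable S1 (deriv \<phi>)" by (rule smooth_integrable(1)[OF s])
  have pg: "integrable S1 (\<lambda>x. prim g x * deriv \<phi> x)"
    by (rule integrable_S1_cont_mult[OF di prim_cont[OF g]])
  have "(\<integral>x. F x * deriv \<phi> x \<partial>S1) = (\<integral>x. c * deriv \<phi> x + prim g x * deriv \<phi> x \<partial>S1)"
    by (rule Bochner_Integration.integral_cong) (auto simp: F algebra_simps)
  also have "\<dots> = c * (\<integral>x. deriv \<phi> x \<partial>S1) + (\<integral>x. prim g x * deriv \<phi> x \<partial>S1)"
    using di pg by simp
  also have "\<dots> = - (\<integral>x. g x * \<phi> x \<partial>S1)"
    using smooth_int_deriv[OF s] prim_pair_smooth[OF g g0 s] by simp
  finally show "(\<integral>x. F x * deriv \<phi> x \<partial>S1) = - (\<integral>x. g x * \<phi> x \<partial>S1)" .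
qed




inductive trig :: "(real \<Rightarrow> real) \<Rightarrow> bool" where
  tconst: "trig (\<lambda>x. c)"
| tcos: "trig cos"
| tsin: "trig sin"
| tadd: "trig f \<Longrightarrow> trig g \<Longrightarrow> trig (\<lambda>x. f x + g x)"
| tmult: "trig f \<Longrightarrow> trig g \<Longrightarrow> trig (\<lambda>x. f x * g x)"

lemma trig_deriv_ex: "trig f \<Longrightarrow> \<exists>f'. trig f' \<and> (\<forall>x. (f has_real_derivative f' x) (at x))"
proof (induction rule: trig.induct)
  case (tconst c) thus ?case by (intro exI[of _ "\<lambda>x. 0"]) (auto intro: trig.tconst)
next
  case tcos
  have "trig (\<lambda>x. (-1) * sin x)" by (intro trig.intros)
  thus ?case by (intro exI[of _ "\<lambda>x. (-1) * sin x"]) (auto intro!: derivative_eq_intros)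
next
  case tsin thus ?case by (intro exI[of _ cos]) (auto intro!: derivative_eq_intros trig.intros)
next
  case (tadd f g)
  then obtain f' g' where "trig f'" "\<forall>x. (f has_real_derivative f' x) (at x)"
    "trig g'" "\<forall>x. (g has_real_derivative g' x) (at x)" by blast
  thus ?case by (intro exI[of _ "\<lambda>x. f' x + g' x"]) (auto intro!: derivative_eq_intros trig.intros)
next
  case (tmult f g)
  then obtain f' g' where a: "trig f'" "\<forall>x. (f has_real_derivative f' x) (at x)"
    "trig g'" "\<forall>x. (g has_real_derivative g' x) (at x)" by blast
  have "trig (\<lambda>x. f' x * g x + f x * g' x)" using a tmult by (intro trig.intros) auto
  thus ?case using a by (intro exI[of _ "\<lambda>x. f' x * g x + f x * g' x"]) (auto intro!: derivative_eq_intros)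
qed

lemma trig_deriv: "trig f \<Longrightarrow> trig (deriv f) \<and> (\<forall>x. (f has_real_derivative deriv f x) (at x))"
proof -
  assume "trig f"
  then obtain f' where a: "trig f'" "\<forall>x. (f has_real_derivative f' x) (at x)"
    using trig_deriv_ex by blast
  hence "deriv f = f'" by (intro ext DERIV_imp_deriv) auto
  thus ?thesis using a by simp
qed

lemma trig_periodic: "trig f \<Longrightarrow> f (x + 2*pi) = f x"
  by (induction rule: trig.induct) auto

lemma trig_funpow: "trig f \<Longrightarrow> trig ((deriv ^^ n) f)"
  by (induction n) (auto dest: trig_deriv)

lemma trig_smooth: "trig f \<Longrightarrow> smooth_periodic f"
  unfolding smooth_periodic_def
proof (intro conjI allI)
  fix n x assume t: "trig f"
  have "trig ((deriv ^^ n) f)" using trig_funpow[OF t] .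
  hence "\<forall>x. ((deriv ^^ n) f has_real_derivative deriv ((deriv ^^ n) f) x) (at x)"
    using trig_deriv by blast
  thus "(deriv ^^ n) f differentiable_on UNIV"
    by (auto simp: differentiable_on_def real_differentiable_def intro: has_field_derivative_at_within)
  show "f (x + 2*pi) = f x" using trig_periodic[OF t] .
qed

lemma trig_cont: "trig f \<Longrightarrow> continuous_on UNIV f"
  using smooth_deriv(2)[OF trig_smooth] .

lemma poly_trig:
  fixes q :: "real \<times> real \<Rightarrow> real"
  assumes "real_polynomial_function q"
  shows "trig (\<lambda>t. q (cos t, sin t))"
  using assms
proof (induction rule: real_polynomial_function.induct)
  case (linear f)
  have l: "linear f" using linear by (rule bounded_linear.linear)
  have fab: "f (a, b) = a * f (1,0) + b * f (0,1)" for a b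
  proof -
    have "f (a, b) = f ((a,0) + (0,b))" by simp
    also have "\<dots> = f (a,0) + f (0,b)" by (rule linear_add[OF l])
    also have "(a,0) = a *\<^sub>R (1::real, 0::real)" by simp
    also have "(0,b) = b *\<^sub>R (0::real, 1::real)" by simp
    finally show ?thesis by (simp only: linear_scale[OF l] real_scaleR_def)
  qed
  have "trig (\<lambda>t. cos t * f (1,0) + sin t * f (0,1))"
    by (intro trig.intros)
  moreover have "(\<lambda>t. f (cos t, sin t)) = (\<lambda>t. cos t * f (1,0) + sin t * f (0,1))"
    by (rule ext, rule fab)
  ultimately show ?case by simp
next
  case (const c) thus ?case by (rule trig.tconst)
next
  case (add f g) thus ?case by (intro trig.intros)
next
  case (mult f g) thus ?case by (intro trig.intros)
qed

definition circ :: "real \<Rightarrow> real \<times> real" where "circ t = (cos t, sin t)"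

lemma circ_cont: "continuous_on A circ"
  unfolding circ_def by (intro continuous_intros)

lemma annihilate_cont:
  fixes \<kappa> :: "real \<Rightarrow> real"
  assumes k: "integrable S1 \<kappa>" and z: "\<And>T. trig T \<Longrightarrow> (\<integral>t. \<kappa> t * T t \<partial>S1) = 0"
    and F: "continuous_on UNIV F"
  shows "(\<integral>t. \<kappa> t * F (circ t) \<partial>S1) = 0"
proof -
  have km[measurable]: "\<kappa> \<in> borel_measurable S1" using k by simp
  define C where "C = circ ` {-pi..pi}"
  have C: "compact C" unfolding C_def by (intro compact_continuous_image circ_cont compact_Icc)
  have Fc: "continuous_on C F" using F continuous_on_subset by blast
  have Fcirc: "continuous_on {-pi..pi} (\<lambda>t. F (circ t))"
    by (intro continuous_on_compose2[OF F circ_cont]) auto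
  have iF: "integrable S1 (\<lambda>t. \<kappa> t * F (circ t))"
    by (rule integrable_S1_mult_cont[OF k Fcirc])
  have le: "\<bar>\<integral>t. \<kappa> t * F (circ t) \<partial>S1\<bar> \<le> e * (\<integral>t. \<bar>\<kappa> t\<bar> \<partial>S1)" if e: "e > 0" for e
  proof -
    obtain q where q: "real_polynomial_function q" "\<And>y. y \<in> C \<Longrightarrow> \<bar>F y - q y\<bar> < e"
      using Stone_Weierstrass_real_polynomial_function[OF C Fc e] by blast
    have tq: "trig (\<lambda>t. q (circ t))" using poly_trig[OF q(1)] unfolding circ_def .
    have iq: "integrable S1 (\<lambda>t. \<kappa> t * q (circ t))"
      by (rule integrable_S1_mult_cont[OF k]) (use trig_cont[OF tq] continuous_on_subset in blast)
    have "(\<integral>t. \<kappa> t * F (circ t) \<partial>S1) = (\<integral>t. \<kappa> t * F (circ t) \<partial>S1) - (\<integral>t. \<kappa> t * q (circ t) \<partial>S1)"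
      using z[OF tq] by simp
    also have "\<dots> = (\<integral>t. \<kappa> t * (F (circ t) - q (circ t)) \<partial>S1)"
      using iF iq by (simp add: right_diff_distrib)
    finally have eq: "(\<integral>t. \<kappa> t * F (circ t) \<partial>S1) = (\<integral>t. \<kappa> t * (F (circ t) - q (circ t)) \<partial>S1)" .
    have "\<bar>\<integral>t. \<kappa> t * (F (circ t) - q (circ t)) \<partial>S1\<bar> \<le> (\<integral>t. \<bar>\<kappa> t * (F (circ t) - q (circ t))\<bar> \<partial>S1)"
      by (rule integral_abs_bound)
    also have "\<dots> \<le> (\<integral>t. e * \<bar>\<kappa> t\<bar> \<partial>S1)"
    proof (rule integral_mono_AE)
      show "integrable S1 (\<lambda>t. \<bar>\<kappa> t * (F (circ t) - q (circ t))\<bar>)"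
        using iF iq by (intro integrable_abs) (simp add: right_diff_distrib)
      show "integrable S1 (\<lambda>t. e * \<bar>\<kappa> t\<bar>)" using k by simp
      show "AE t in S1. \<bar>\<kappa> t * (F (circ t) - q (circ t))\<bar> \<le> e * \<bar>\<kappa> t\<bar>"
      proof (rule AE_S1_I)
        fix t assume t: "t \<in> {-pi..pi}"
        have "circ t \<in> C" unfolding C_def using t by auto
        hence "\<bar>F (circ t) - q (circ t)\<bar> \<le> e" using q(2) by (simp add: less_imp_le)
        hence "\<bar>\<kappa> t\<bar> * \<bar>F (circ t) - q (circ t)\<bar> \<le> \<bar>\<kappa> t\<bar> * e"
          by (rule mult_left_mono) auto
        thus "\<bar>\<kappa> t * (F (circ t) - q (circ t))\<bar> \<le> e * \<bar>\<kappa> t\<bar>"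
          by (simp add: abs_mult mult.commute)
      qed
    qed
    also have "\<dots> = e * (\<integral>t. \<bar>\<kappa> t\<bar> \<partial>S1)" by simp
    finally show ?thesis using eq by simp
  qed
  show ?thesis
  proof (rule ccontr)
    assume ne: "(\<integral>t. \<kappa> t * F (circ t) \<partial>S1) \<noteq> 0"
    define A where "A = \<bar>\<integral>t. \<kappa> t * F (circ t) \<partial>S1\<bar>"
    define K where "K = (\<integral>t. \<bar>\<kappa> t\<bar> \<partial>S1)"
    have A: "A > 0" using ne unfolding A_def by simp
    have K: "K \<ge> 0" unfolding K_def by simp
    have "A \<le> (A / (2*(K+1))) * K" unfolding A_def K_def
      using le[of "A / (2*(K+1))"] A K unfolding A_def K_def by simp
    also have "\<dots> < A"
    proof -
      have d: "2*(K+1) > 0" using K by simp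
      have m: "A * K < A * (2*(K+1))" using A K by (intro mult_strict_left_mono) auto
      have "(A/(2*(K+1)))*K = (A*K)/(2*(K+1))" by simp
      also have "\<dots> < A" using m d by (simp add: pos_divide_less_eq mult.commute)
      finally show ?thesis .
    qed
    finally show False by simp
  qed
qed

definition clamp :: "real \<Rightarrow> real" where "clamp s = min 1 (max 0 s)"

lemma clamp_cont: "continuous_on A (\<lambda>y. clamp (f y))" if "continuous_on A f"
  unfolding clamp_def using that by (intro continuous_intros)

lemma clamp_bound: "0 \<le> clamp s" "clamp s \<le> 1"
  unfolding clamp_def by auto

lemma clamp_lim: "(\<lambda>n. clamp (real n * s)) \<longlonglongrightarrow> (if s > 0 then 1 else 0)"
proof (cases "s > 0")
  case True
  obtain N :: nat where N: "real N > 1 / s" using reals_Archimedean2 by blast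
  have "\<forall>n\<ge>N. clamp (real n * s) = 1"
  proof (intro allI impI)
    fix n assume "N \<le> n"
    hence "real n > 1 / s" using N by (meson le_less_trans of_nat_le_iff not_le)
    hence "real n * s > 1" using True by (simp add: divide_less_eq)
    thus "clamp (real n * s) = 1" unfolding clamp_def by simp
  qed
  hence "eventually (\<lambda>n. clamp (real n * s) = 1) sequentially" by (auto simp: eventually_sequentially)
  thus ?thesis using True by (simp add: tendsto_eventually)
next
  case False
  hence "clamp (real n * s) = 0" for n unfolding clamp_def
    by (simp add: mult_nonneg_nonpos)
  thus ?thesis using False by simp
qed

lemma annihilate_halfplanes:
  fixes \<kappa> :: "real \<Rightarrow> real" and a b :: "real \<times> real \<Rightarrow> real"
  assumes k: "integrable S1 \<kappa>" and z: "\<And>T. trig T \<Longrightarrow> (\<integral>t. \<kappa> t * T t \<partial>S1) = 0"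
    and a: "continuous_on UNIV a" and b: "continuous_on UNIV b"
  shows "(\<integral>t. \<kappa> t * (if a (circ t) > 0 \<and> b (circ t) > 0 then 1 else 0) \<partial>S1) = 0"
proof -
  have km[measurable]: "\<kappa> \<in> borel_measurable S1" using k by simp
  have am[measurable]: "a \<in> borel_measurable borel" using a by (rule borel_measurable_continuous_onI)
  have bm[measurable]: "b \<in> borel_measurable borel" using b by (rule borel_measurable_continuous_onI)
  have cm[measurable]: "circ \<in> borel_measurable S1"
    unfolding circ_def by measurable
  define s where "s = (\<lambda>(n::nat) t. \<kappa> t * (clamp (real n * a (circ t)) * clamp (real n * b (circ t))))"
  have Fn: "continuous_on UNIV (\<lambda>y. clamp (real n * a y) * clamp (real n * b y))" for n
    by (intro continuous_intros clamp_cont a b)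
  have s0: "(\<integral>t. s n t \<partial>S1) = 0" for n
    unfolding s_def using annihilate_cont[OF k z Fn[of n]] by simp
  have lim: "(\<lambda>n. (\<integral>t. s n t \<partial>S1)) \<longlonglongrightarrow> (\<integral>t. \<kappa> t * (if a (circ t) > 0 \<and> b (circ t) > 0 then 1 else 0) \<partial>S1)"
  proof (rule integral_dominated_convergence[where w="\<lambda>t. \<bar>\<kappa> t\<bar>"])
    show "(\<lambda>t. \<kappa> t * (if a (circ t) > 0 \<and> b (circ t) > 0 then 1 else 0)) \<in> borel_measurable S1"
      by measurable
    show "s n \<in> borel_measurable S1" for n unfolding s_def clamp_def by measurable
    show "integrable S1 (\<lambda>t. \<bar>\<kappa> t\<bar>)" using k by simp
    show "AE t in S1. (\<lambda>n. s n t) \<longlonglongrightarrow> \<kappa> t * (if a (circ t) > 0 \<and> b (circ t) > 0 then 1 else 0)"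
    proof (rule AE_I2)
      fix t
      have "(\<lambda>n. \<kappa> t * (clamp (real n * a (circ t)) * clamp (real n * b (circ t))))
             \<longlonglongrightarrow> \<kappa> t * ((if a (circ t) > 0 then 1 else 0) * (if b (circ t) > 0 then 1 else 0))"
        by (intro tendsto_mult tendsto_const clamp_lim)
      thus "(\<lambda>n. s n t) \<longlonglongrightarrow> \<kappa> t * (if a (circ t) > 0 \<and> b (circ t) > 0 then 1 else 0)"
        unfolding s_def by (simp split: if_splits)
    qed
    show "AE t in S1. norm (s n t) \<le> \<bar>\<kappa> t\<bar>" for n
    proof (rule AE_I2)
      fix t
      define c1 where "c1 = clamp (real n * a (circ t))"
      define c2 where "c2 = clamp (real n * b (circ t))"
      have "0 \<le> c1" "c1 \<le> 1" "0 \<le> c2" "c2 \<le> 1" unfolding c1_def c2_def by (rule clamp_bound)+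
      hence "c1 * c2 \<le> 1 * 1" by (intro mult_mono) auto
      hence c: "\<bar>c1 * c2\<bar> \<le> 1" using \<open>0 \<le> c1\<close> \<open>0 \<le> c2\<close> by simp
      have "norm (s n t) = \<bar>\<kappa> t\<bar> * \<bar>c1 * c2\<bar>" unfolding s_def c1_def c2_def by (simp add: abs_mult)
      also have "\<dots> \<le> \<bar>\<kappa> t\<bar> * 1" using c by (intro mult_left_mono) auto
      finally show "norm (s n t) \<le> \<bar>\<kappa> t\<bar>" by simp
    qed
  qed
  hence "(\<lambda>n. 0::real) \<longlonglongrightarrow> (\<integral>t. \<kappa> t * (if a (circ t) > 0 \<and> b (circ t) > 0 then 1 else 0) \<partial>S1)"
    using s0 by simp
  thus ?thesis by (simp add: LIMSEQ_const_iff)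
qed




lemma zero_from_halflines:
  fixes \<kappa> :: "real \<Rightarrow> real"
  assumes k: "integrable S1 \<kappa>"
    and z: "\<And>x. x \<in> {-pi..pi} \<Longrightarrow> (\<integral>t. indicator {..x} t * \<kappa> t \<partial>S1) = 0"
  shows "AE t in S1. \<kappa> t = 0"
proof -
  have km[measurable]: "\<kappa> \<in> borel_measurable S1" using k by simp
  have int0: "(\<integral>t. \<kappa> t \<partial>S1) = 0"
  proof -
    have "(\<integral>t. \<kappa> t \<partial>S1) = (\<integral>t. indicator {..pi} t * \<kappa> t \<partial>S1)"
      by (rule Bochner_Integration.integral_cong) auto
    thus ?thesis using z[of pi] by simp
  qed
  have up: "(\<integral>t. \<kappa> t * indicator {x<..} t \<partial>S1) = 0" for x
  proof (cases "x < -pi")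
    case True
    have "(\<integral>t. \<kappa> t * indicator {x<..} t \<partial>S1) = (\<integral>t. \<kappa> t \<partial>S1)"
      by (rule Bochner_Integration.integral_cong) (use True in auto)
    thus ?thesis using int0 by simp
  next
    case False
    show ?thesis
    proof (cases "x > pi")
      case True
      have "(\<integral>t. \<kappa> t * indicator {x<..} t \<partial>S1) = (\<integral>t. 0 \<partial>S1)"
        by (rule Bochner_Integration.integral_cong) (use True in auto)
      thus ?thesis by simp
    next
      case False2: False
      hence x: "x \<in> {-pi..pi}" using False by auto
      have "(\<integral>t. \<kappa> t * indicator {x<..} t \<partial>S1) = (\<integral>t. \<kappa> t - indicator {..x} t * \<kappa> t \<partial>S1)"
        by (rule Bochner_Integration.integral_cong) (auto simp: indicator_def)
      also have "\<dots> = 0" using int0 z[OF x] integrable_S1_ind_mult[OF k] k by simp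
      finally show ?thesis .
    qed
  qed
  define \<kappa>' where "\<kappa>' = (\<lambda>t. indicator {-pi..pi} t * \<kappa> t)"
  have i': "integrable lebesgue \<kappa>'"
    using k unfolding \<kappa>'_def by (subst (asm) integrable_restrict_space) auto
  have "\<kappa>' \<in> borel_measurable (completion lborel)" using i' by simp
  then obtain g where gm[measurable]: "g \<in> borel_measurable lborel" and ge: "AE x in lborel. \<kappa>' x = g x"
    using completion_ex_borel_measurable_real by blast
  have gmc: "g \<in> borel_measurable (completion lborel)"
    using gm by (rule measurable_completion)
  have gec: "AE x in completion lborel. \<kappa>' x = g x" using ge by (rule AE_completion)
  have gic: "integrable (completion lborel) g"
    using i' gmc gec by (rule integrable_cong_AE_imp)
  have gi: "integrable lborel g" using gic integrable_completion[OF gm] by simp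
  have gup: "(\<integral>y. g y * indicator {x<..} y \<partial>lborel) = 0" for x
  proof -
    have "(\<integral>y. g y * indicator {x<..} y \<partial>lborel) = (\<integral>y. g y * indicator {x<..} y \<partial>completion lborel)"
      by (rule integral_completion[symmetric]) simp
    also have "\<dots> = (\<integral>y. \<kappa>' y * indicator {x<..} y \<partial>completion lborel)"
    proof (rule integral_cong_AE)
      have [measurable]: "g \<in> borel_measurable lebesgue" using gmc .
      have [measurable]: "\<kappa>' \<in> borel_measurable lebesgue" using i' by simp
      have ind: "(indicator {x<..} :: real \<Rightarrow> real) \<in> borel_measurable (completion lborel)"
        by (rule measurable_completion) simp
      show "(\<lambda>y. g y * indicator {x<..} y) \<in> borel_measurable (completion lborel)"
        by (intro borel_measurable_times) (use gmc ind in auto)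
      show "(\<lambda>y. \<kappa>' y * indicator {x<..} y) \<in> borel_measurable (completion lborel)"
        by (intro borel_measurable_times) (use i' ind in auto)
      show "AE y in completion lborel. g y * indicator {x<..} y = \<kappa>' y * indicator {x<..} y"
        using gec by (auto elim!: eventually_mono)
    qed
    also have "\<dots> = (\<integral>y. \<kappa> y * indicator {x<..} y \<partial>S1)"
      by (subst integral_restrict_space) (auto simp: \<kappa>'_def mult.assoc)
    finally show ?thesis using up by simp
  qed
  have gp: "integrable lborel (\<lambda>y. max 0 (g y) * indicator A y)" if A[measurable]: "A \<in> sets borel" for A
    by (rule Bochner_Integration.integrable_bound[OF gi]) (auto simp: indicator_def)
  have gn: "integrable lborel (\<lambda>y. max 0 (- g y) * indicator A y)" if A[measurable]: "A \<in> sets borel" for A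
    by (rule Bochner_Integration.integrable_bound[OF gi]) (auto simp: indicator_def)
  define N1 where "N1 = density lborel (\<lambda>y. ennreal (g y))"
  define N2 where "N2 = density lborel (\<lambda>y. ennreal (- g y))"
  have en: "ennreal r * indicator A y = ennreal (max 0 r * indicator A y)" for r A and y :: real
    by (cases "r \<ge> 0") (auto simp: indicator_def ennreal_neg)
  have e1: "emeasure N1 A = ennreal (\<integral>y. max 0 (g y) * indicator A y \<partial>lborel)" if "A \<in> sets borel" for A
  proof -
    have "emeasure N1 A = (\<integral>\<^sup>+ y. ennreal (g y) * indicator A y \<partial>lborel)"
      unfolding N1_def using that by (subst emeasure_density) auto
    also have "\<dots> = (\<integral>\<^sup>+ y. ennreal (max 0 (g y) * indicator A y) \<partial>lborel)" by (simp add: en)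
    also have "\<dots> = ennreal (\<integral>y. max 0 (g y) * indicator A y \<partial>lborel)"
      by (rule nn_integral_eq_integral[OF gp[OF that]]) auto
    finally show ?thesis .
  qed
  have e2: "emeasure N2 A = ennreal (\<integral>y. max 0 (- g y) * indicator A y \<partial>lborel)" if "A \<in> sets borel" for A
  proof -
    have "emeasure N2 A = (\<integral>\<^sup>+ y. ennreal (- g y) * indicator A y \<partial>lborel)"
      unfolding N2_def using that by (subst emeasure_density) auto
    also have "\<dots> = (\<integral>\<^sup>+ y. ennreal (max 0 (- g y) * indicator A y) \<partial>lborel)" by (simp add: en)
    also have "\<dots> = ennreal (\<integral>y. max 0 (- g y) * indicator A y \<partial>lborel)"
      by (rule nn_integral_eq_integral[OF gn[OF that]]) auto
    finally show ?thesis .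
  qed
  have "N1 = N2"
  proof (rule measure_eqI_lessThan)
    show "sets N1 = sets borel" "sets N2 = sets borel" unfolding N1_def N2_def by auto
    show "emeasure N1 {x<..} < \<infinity>" for x using e1[of "{x<..}"] by simp
    show "emeasure N1 {x<..} = emeasure N2 {x<..}" for x
    proof -
      have "(\<integral>y. max 0 (g y) * indicator {x<..} y \<partial>lborel) - (\<integral>y. max 0 (- g y) * indicator {x<..} y \<partial>lborel)
          = (\<integral>y. max 0 (g y) * indicator {x<..} y - max 0 (- g y) * indicator {x<..} y \<partial>lborel)"
        by (rule Bochner_Integration.integral_diff[symmetric]) (use gp[of "{x<..}"] gn[of "{x<..}"] in auto)
      also have "\<dots> = (\<integral>y. g y * indicator {x<..} y \<partial>lborel)"
        by (rule Bochner_Integration.integral_cong) (auto simp: indicator_def)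
      finally have "(\<integral>y. max 0 (g y) * indicator {x<..} y \<partial>lborel) - (\<integral>y. max 0 (- g y) * indicator {x<..} y \<partial>lborel)
          = (\<integral>y. g y * indicator {x<..} y \<partial>lborel)" .
      hence "(\<integral>y. max 0 (g y) * indicator {x<..} y \<partial>lborel) = (\<integral>y. max 0 (- g y) * indicator {x<..} y \<partial>lborel)"
        using gup[of x] by simp
      thus ?thesis using e1[of "{x<..}"] e2[of "{x<..}"] by simp
    qed
  qed
  have fin: "integral\<^sup>N lborel (\<lambda>y. ennreal (g y)) \<noteq> \<infinity>"
  proof -
    have "integral\<^sup>N lborel (\<lambda>y. ennreal (g y)) = emeasure N1 UNIV"
      unfolding N1_def by (subst emeasure_density) auto
    thus ?thesis using e1[of UNIV] by simp
  qed
  have "AE y in lborel. ennreal (g y) = ennreal (- g y)"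
    using finite_density_unique[of "\<lambda>y. ennreal (g y)" lborel "\<lambda>y. ennreal (- g y)"] fin \<open>N1 = N2\<close>
    unfolding N1_def N2_def by auto
  hence "AE y in lborel. g y = 0"
  proof (elim eventually_mono)
    fix y assume e: "ennreal (g y) = ennreal (- g y)"
    show "g y = 0"
    proof (rule ccontr)
      assume "g y \<noteq> 0"
      hence "g y > 0 \<or> g y < 0" by auto
      thus False using e by (auto simp: ennreal_neg)
    qed
  qed
  hence "AE y in lborel. \<kappa>' y = 0" using ge by eventually_elim auto
  hence "AE y in completion lborel. \<kappa>' y = 0" by (rule AE_completion)
  thus ?thesis
    by (subst AE_restrict_space_iff) (auto simp: \<kappa>'_def elim!: eventually_mono)
qed

lemma sin_pos_I: "t \<in> {-pi..pi} \<Longrightarrow> sin t > 0 \<Longrightarrow> 0 < t \<and> t < pi"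
proof -
  assume t: "t \<in> {-pi..pi}" and s: "sin t > 0"
  have "t > 0"
  proof (rule ccontr)
    assume "\<not> t > 0"
    hence "0 \<le> sin (-t)" using t by (intro sin_ge_zero) auto
    thus False using s by simp
  qed
  moreover have "t \<noteq> pi" using s by auto
  ultimately show ?thesis using t by auto
qed

lemma sin_neg_I: "t \<in> {-pi..pi} \<Longrightarrow> sin t < 0 \<Longrightarrow> -pi < t \<and> t < 0"
proof -
  assume t: "t \<in> {-pi..pi}" and s: "sin t < 0"
  have "t < 0"
  proof (rule ccontr)
    assume "\<not> t < 0"
    hence "0 \<le> sin t" using t by (intro sin_ge_zero) auto
    thus False using s by simp
  qed
  moreover have "t \<noteq> -pi" using s by auto
  ultimately show ?thesis using t by auto
qed

lemma halflines_from_trig: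
  fixes \<kappa> :: "real \<Rightarrow> real"
  assumes k: "integrable S1 \<kappa>" and z: "\<And>T. trig T \<Longrightarrow> (\<integral>t. \<kappa> t * T t \<partial>S1) = 0"
    and x: "x \<in> {-pi..pi}"
  shows "(\<integral>t. indicator {..x} t * \<kappa> t \<partial>S1) = 0"
proof -
  have km[measurable]: "\<kappa> \<in> borel_measurable S1" using k by simp
  have int0: "(\<integral>t. \<kappa> t \<partial>S1) = 0" using z[OF trig.tconst[of 1]] by simp
  have ai: "integrable S1 (\<lambda>t. \<kappa> t * (if P t then 1 else 0))" if [measurable]: "Measurable.pred S1 P" for P
    by (rule integrable_S1_bound[OF k]) auto
  consider "x = pi" | "x = -pi" | "0 \<le> x" "x < pi" | "-pi < x" "x < 0" using x by fastforce
  thus ?thesis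
  proof cases
    case 1
    have "(\<integral>t. indicator {..x} t * \<kappa> t \<partial>S1) = (\<integral>t. \<kappa> t \<partial>S1)"
      by (rule Bochner_Integration.integral_cong) (use 1 in auto)
    thus ?thesis using int0 by simp
  next
    case 2
    have ae: "AE t in S1. indicator {..x} t * \<kappa> t = 0"
    proof (rule eventually_mono[OF eventually_conj[OF AE_S1_neq[of "-pi"] AE_space]])
      fix t assume "t \<noteq> -pi \<and> t \<in> space S1"
      thus "indicator {..x} t * \<kappa> t = 0" using 2 by (auto simp: indicator_def)
    qed
    have "(\<integral>t. indicator {..x} t * \<kappa> t \<partial>S1) = (\<integral>t. 0 \<partial>S1)"
      by (rule integral_cong_AE) (use ae in auto)
    thus ?thesis by simp
  next
    case 3
    have H: "(\<integral>t. \<kappa> t * (if cos x - cos t > 0 \<and> sin t > 0 then 1 else 0) \<partial>S1) = 0"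
      using annihilate_halfplanes[OF k z, of "\<lambda>y. cos x - fst y" "\<lambda>y. snd y"]
      by (simp add: circ_def continuous_intros)
    have eq: "indicator {..x} t * \<kappa> t = \<kappa> t - \<kappa> t * (if cos x - cos t > 0 \<and> sin t > 0 then 1 else 0)"
      if t: "t \<in> {-pi..pi}" "t \<noteq> pi" for t
    proof (cases "t \<le> x")
      case True
      have "\<not> (cos x - cos t > 0 \<and> sin t > 0)"
      proof
        assume c: "cos x - cos t > 0 \<and> sin t > 0"
        hence "0 < t \<and> t < pi" using sin_pos_I t by auto
        hence "x < t" using c 3 cos_mono_less_eq[of t x] by auto
        thus False using True by simp
      qed
      thus ?thesis using True by (auto simp: indicator_def)
    next
      case False
      hence "0 < t" "t < pi" using 3 t by auto
      hence "sin t > 0" by (intro sin_gt_zero)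
      moreover have "cos t < cos x" using \<open>0 < t\<close> \<open>t < pi\<close> 3 False cos_mono_less_eq[of t x] by auto
      ultimately show ?thesis using False by (auto simp: indicator_def)
    qed
    have ae: "AE t in S1. indicator {..x} t * \<kappa> t = \<kappa> t - \<kappa> t * (if cos x - cos t > 0 \<and> sin t > 0 then 1 else 0)"
    proof (rule eventually_mono[OF eventually_conj[OF AE_S1_neq[of pi] AE_space]])
      fix t assume "t \<noteq> pi \<and> t \<in> space S1"
      thus "indicator {..x} t * \<kappa> t = \<kappa> t - \<kappa> t * (if cos x - cos t > 0 \<and> sin t > 0 then 1 else 0)"
        by (intro eq) auto
    qed
    have "(\<integral>t. indicator {..x} t * \<kappa> t \<partial>S1) = (\<integral>t. \<kappa> t - \<kappa> t * (if cos x - cos t > 0 \<and> sin t > 0 then 1 else 0) \<partial>S1)"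
      by (rule integral_cong_AE) (use ae in auto)
    also have "\<dots> = 0" using H int0 k ai by simp
    finally show ?thesis .
  next
    case 4
    have H: "(\<integral>t. \<kappa> t * (if cos x - cos t > 0 \<and> - sin t > 0 then 1 else 0) \<partial>S1) = 0"
      using annihilate_halfplanes[OF k z, of "\<lambda>y. cos x - fst y" "\<lambda>y. - snd y"]
      by (simp add: circ_def continuous_intros)
    have eq: "indicator {..x} t * \<kappa> t = \<kappa> t * (if cos x - cos t > 0 \<and> - sin t > 0 then 1 else 0)"
      if t: "t \<in> {-pi..pi}" "t \<noteq> -pi" "t \<noteq> x" for t
    proof (cases "t < x")
      case True
      hence "-pi < t" "t < 0" using 4 t by auto
      hence "sin (-t) > 0" by (intro sin_gt_zero) auto
      moreover have "cos (-t) < cos (-x)"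
        using \<open>-pi < t\<close> \<open>t < 0\<close> 4 True cos_mono_less_eq[of "-t" "-x"] by auto
      ultimately show ?thesis using True by (auto simp: indicator_def)
    next
      case False
      hence tx: "x < t" using t by auto
      have "\<not> (cos x - cos t > 0 \<and> - sin t > 0)"
      proof
        assume c: "cos x - cos t > 0 \<and> - sin t > 0"
        hence "-pi < t \<and> t < 0" using sin_neg_I t by auto
        hence "cos (-t) < cos (-x) \<longleftrightarrow> -x < -t" using 4 cos_mono_less_eq[of "-t" "-x"] by auto
        thus False using c tx by simp
      qed
      thus ?thesis using tx by (auto simp: indicator_def)
    qed
    have ae: "AE t in S1. indicator {..x} t * \<kappa> t = \<kappa> t * (if cos x - cos t > 0 \<and> - sin t > 0 then 1 else 0)"
    proof (rule eventually_mono[OF eventually_conj[OF AE_S1_neq[of "-pi"] eventually_conj[OF AE_S1_neq[of x] AE_space]]])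
      fix t assume "t \<noteq> -pi \<and> t \<noteq> x \<and> t \<in> space S1"
      thus "indicator {..x} t * \<kappa> t = \<kappa> t * (if cos x - cos t > 0 \<and> - sin t > 0 then 1 else 0)"
        by (intro eq) auto
    qed
    have "(\<integral>t. indicator {..x} t * \<kappa> t \<partial>S1) = (\<integral>t. \<kappa> t * (if cos x - cos t > 0 \<and> - sin t > 0 then 1 else 0) \<partial>S1)"
      by (rule integral_cong_AE) (use ae in auto)
    thus ?thesis using H by simp
  qed
qed

lemma dbr:
  fixes \<kappa> :: "real \<Rightarrow> real"
  assumes k: "integrable S1 \<kappa>"
    and z: "\<And>\<phi>. smooth_periodic \<phi> \<Longrightarrow> (\<integral>t. \<kappa> t * deriv \<phi> t \<partial>S1) = 0"
  shows "AE t in S1. \<kappa> t = (\<integral>t. \<kappa> t \<partial>S1) / (2*pi)"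
proof -
  have km[measurable]: "\<kappa> \<in> borel_measurable S1" using k by simp
  define c where "c = (\<integral>t. \<kappa> t \<partial>S1) / (2*pi)"
  define \<kappa>0 where "\<kappa>0 = (\<lambda>t. \<kappa> t - c)"
  have k0: "integrable S1 \<kappa>0" using k unfolding \<kappa>0_def by simp
  have z0: "(\<integral>t. \<kappa>0 t * T t \<partial>S1) = 0" if T: "trig T" for T
  proof -
    have Tc: "continuous_on UNIV T" by (rule trig_cont[OF T])
    have TcI: "continuous_on {-pi..pi} T" using Tc continuous_on_subset by blast
    have Ti: "integrable S1 T" by (rule integrable_S1_cont[OF TcI])
    define m where "m = (\<integral>t. T t \<partial>S1) / (2*pi)"
    define R where "R = (\<lambda>t. T t + (- m))"
    have tR: "trig R" unfolding R_def using T by (intro trig.intros)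
    have Rc: "continuous_on UNIV R" by (rule trig_cont[OF tR])
    have Rcont: "isCont R x" for x
      using trig_deriv[OF tR] by (blast intro: DERIV_isCont)
    have "\<exists>F. \<forall>x::real. -\<infinity> < ereal x \<longrightarrow> ereal x < \<infinity> \<longrightarrow> (F has_vector_derivative R x) (at x)"
      by (rule einterval_antiderivative) (simp_all add: Rcont)
    then obtain \<Phi> where \<Phi>0: "\<forall>x::real. -\<infinity> < ereal x \<longrightarrow> ereal x < \<infinity> \<longrightarrow> (\<Phi> has_vector_derivative R x) (at x)"
      by blast
    have \<Phi>: "(\<Phi> has_vector_derivative R x) (at x)" for x
      using \<Phi>0 by simp
    have \<Phi>d: "(\<Phi> has_real_derivative R x) (at x)" for x
      using \<Phi>[of x] by (simp add: has_real_derivative_iff_has_vector_derivative)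
    have d\<Phi>: "deriv \<Phi> = R" by (intro ext DERIV_imp_deriv \<Phi>d)
    have intR: "(\<integral>t. R t \<partial>S1) = 0"
      using Ti unfolding R_def m_def by simp
    have per: "\<Phi> (x + 2*pi) = \<Phi> x" for x
    proof -
      define D where "D = (\<lambda>x. \<Phi> (x + 2*pi) - \<Phi> x)"
      have "DERIV D x :> 0" for x
      proof -
        have s: "DERIV (\<lambda>x. \<Phi> (x + 2*pi)) x :> R (x + 2*pi)"
          using \<Phi>d[of "x + 2*pi"] by (simp add: DERIV_shift)
        have "DERIV D x :> R (x + 2*pi) - R x"
          unfolding D_def by (rule DERIV_diff[OF s \<Phi>d])
        thus ?thesis using trig_periodic[OF tR, of x] by simp
      qed
      hence "\<forall>x. DERIV D x :> 0" by blast
      hence "D x = D (-pi)" by (rule DERIV_isconst_all)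
      also have "D (-pi) = \<Phi> pi - \<Phi> (-pi)" unfolding D_def by simp
      also have "\<Phi> pi - \<Phi> (-pi) = integral {-pi..pi} R"
      proof -
        have "(R has_integral (\<Phi> pi - \<Phi> (-pi))) {-pi..pi}"
          by (intro fundamental_theorem_of_calculus)
             (auto intro: has_vector_derivative_at_within \<Phi>)
        thus ?thesis by (simp add: integral_unique)
      qed
      also have "\<dots> = (\<integral>t. R t \<partial>S1)"
        by (rule integral_S1_eq_Henstock[symmetric]) (rule integrable_S1_cont, use Rc continuous_on_subset in blast)
      finally show ?thesis using intR unfolding D_def by simp
    qed
    have sm: "smooth_periodic \<Phi>"
      unfolding smooth_periodic_def
    proof (intro conjI allI)
      fix n
      show "(deriv ^^ n) \<Phi> differentiable_on UNIV"
      proof (cases n)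
        case 0
        thus ?thesis using \<Phi>d by (auto simp: differentiable_on_def real_differentiable_def intro: has_field_derivative_at_within)
      next
        case (Suc k)
        have "(deriv ^^ n) \<Phi> = (deriv ^^ k) R" unfolding Suc funpow_Suc_right d\<Phi>[symmetric] by simp
        thus ?thesis using trig_smooth[OF tR] unfolding smooth_periodic_def by simp
      qed
    next
      fix x show "\<Phi> (x + 2*pi) = \<Phi> x" by (rule per)
    qed
    have kR: "(\<integral>t. \<kappa> t * R t \<partial>S1) = 0" using z[OF sm] d\<Phi> by simp
    have kTi: "integrable S1 (\<lambda>t. \<kappa> t * T t)" by (rule integrable_S1_mult_cont[OF k TcI])
    have "(\<integral>t. \<kappa> t * T t \<partial>S1) = (\<integral>t. \<kappa> t * R t + m * \<kappa> t \<partial>S1)"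
      by (rule Bochner_Integration.integral_cong) (auto simp: R_def algebra_simps)
    also have "\<dots> = (\<integral>t. \<kappa> t * R t \<partial>S1) + m * (\<integral>t. \<kappa> t \<partial>S1)"
      using integrable_S1_mult_cont[OF k continuous_on_subset[OF Rc]] k by simp
    finally have kT: "(\<integral>t. \<kappa> t * T t \<partial>S1) = m * (\<integral>t. \<kappa> t \<partial>S1)" using kR by simp
    have "(\<integral>t. \<kappa>0 t * T t \<partial>S1) = (\<integral>t. \<kappa> t * T t - c * T t \<partial>S1)"
      by (rule Bochner_Integration.integral_cong) (auto simp: \<kappa>0_def algebra_simps)
    also have "\<dots> = (\<integral>t. \<kappa> t * T t \<partial>S1) - c * (\<integral>t. T t \<partial>S1)"
      using kTi Ti by simp
    also have "\<dots> = 0" unfolding kT c_def m_def by simp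
    finally show ?thesis .
  qed
  have "AE t in S1. \<kappa>0 t = 0"
    by (rule zero_from_halflines[OF k0]) (rule halflines_from_trig[OF k0 z0])
  thus ?thesis unfolding \<kappa>0_def c_def by (auto elim!: eventually_mono)
qed

lemma rep:
  assumes f: "integrable S1 (f::real\<Rightarrow>real)" and g: "integrable S1 g" and w: "weak_deriv f g"
  shows "(\<integral>x. g x \<partial>S1) = 0" and "\<exists>c. AE x in S1. f x = c + prim g x"
proof -
  have s1: "smooth_periodic (\<lambda>x. 1)" by (rule trig_smooth[OF trig.tconst])
  have d1: "deriv (\<lambda>x. 1::real) = (\<lambda>x. 0)" by (intro ext DERIV_imp_deriv) auto
  have "(\<integral>x. f x * deriv (\<lambda>x. 1) x \<partial>S1) = - (\<integral>x. g x * 1 \<partial>S1)"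
    using w s1 unfolding weak_deriv_def by blast
  thus g0: "(\<integral>x. g x \<partial>S1) = 0" unfolding d1 by simp
  define \<kappa> where "\<kappa> = (\<lambda>x. f x - prim g x)"
  have pgi: "integrable S1 (prim g)" by (rule integrable_S1_cont[OF prim_cont[OF g]])
  have ki: "integrable S1 \<kappa>" unfolding \<kappa>_def using f pgi by simp
  have z: "(\<integral>t. \<kappa> t * deriv \<phi> t \<partial>S1) = 0" if s: "smooth_periodic \<phi>" for \<phi>
  proof -
    have fi: "integrable S1 (\<lambda>t. f t * deriv \<phi> t)"
      by (rule integrable_S1_mult_cont[OF f smooth_integrable(4)[OF s]])
    have pi: "integrable S1 (\<lambda>t. prim g t * deriv \<phi> t)"
      by (rule integrable_S1_mult_cont[OF pgi smooth_integrable(4)[OF s]])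
    have "(\<integral>t. \<kappa> t * deriv \<phi> t \<partial>S1) = (\<integral>t. f t * deriv \<phi> t \<partial>S1) - (\<integral>t. prim g t * deriv \<phi> t \<partial>S1)"
      unfolding \<kappa>_def using fi pi by (simp add: left_diff_distrib)
    also have "\<dots> = 0"
      using w s prim_pair_smooth[OF g g0 s] unfolding weak_deriv_def by simp
    finally show ?thesis .
  qed
  have "AE t in S1. \<kappa> t = (\<integral>t. \<kappa> t \<partial>S1) / (2*pi)" by (rule dbr[OF ki z])
  thus "\<exists>c. AE x in S1. f x = c + prim g x"
    unfolding \<kappa>_def by (intro exI[of _ "(\<integral>t. f t - prim g t \<partial>S1) / (2*pi)"]) (auto elim!: eventually_mono)
qed




lemma sup_bound_prim:
  assumes h: "integrable S1 (h::real\<Rightarrow>real)" and Fi: "integrable S1 F"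
    and F: "\<And>x. x \<in> {-pi..pi} \<Longrightarrow> F x = c + prim h x" and x: "x \<in> {-pi..pi}"
  shows "2*pi*\<bar>F x\<bar> \<le> (\<integral>y. \<bar>F y\<bar> \<partial>S1) + 2*pi*(\<integral>y. \<bar>h y\<bar> \<partial>S1)"
proof -
  have pt: "\<bar>F x\<bar> \<le> \<bar>F y\<bar> + (\<integral>y. \<bar>h y\<bar> \<partial>S1)" if y: "y \<in> {-pi..pi}" for y
  proof -
    have "\<bar>F x - F y\<bar> = \<bar>prim h x - prim h y\<bar>" using F[OF x] F[OF y] by simp
    also have "\<dots> \<le> (\<integral>y. \<bar>h y\<bar> \<partial>S1)" by (rule prim_diff_bound[OF h x y])
    finally show ?thesis by linarith
  qed
  have "2*pi*\<bar>F x\<bar> = (\<integral>y. \<bar>F x\<bar> \<partial>S1)" by simp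
  also have "\<dots> \<le> (\<integral>y. \<bar>F y\<bar> + (\<integral>y. \<bar>h y\<bar> \<partial>S1) \<partial>S1)"
    using Fi pt by (intro integral_mono) auto
  also have "\<dots> = (\<integral>y. \<bar>F y\<bar> \<partial>S1) + 2*pi*(\<integral>y. \<bar>h y\<bar> \<partial>S1)"
    using Fi by simp
  finally show ?thesis .
qed

lemma sup_bound_mean0:
  assumes h: "integrable S1 (h::real\<Rightarrow>real)" and Fi: "integrable S1 F"
    and F: "\<And>x. x \<in> {-pi..pi} \<Longrightarrow> F x = c + prim h x" and x: "x \<in> {-pi..pi}"
    and F0: "(\<integral>y. F y \<partial>S1) = 0"
  shows "\<bar>F x\<bar> \<le> (\<integral>y. \<bar>h y\<bar> \<partial>S1)"
proof -
  have pt: "\<bar>F x - F y\<bar> \<le> (\<integral>y. \<bar>h y\<bar> \<partial>S1)" if y: "y \<in> {-pi..pi}" for y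
  proof -
    have "\<bar>F x - F y\<bar> = \<bar>prim h x - prim h y\<bar>" using F[OF x] F[OF y] by simp
    also have "\<dots> \<le> (\<integral>y. \<bar>h y\<bar> \<partial>S1)" by (rule prim_diff_bound[OF h x y])
    finally show ?thesis .
  qed
  have "2*pi*F x = (\<integral>y. F x - F y \<partial>S1)" using Fi F0 by simp
  hence "2*pi*\<bar>F x\<bar> = \<bar>\<integral>y. F x - F y \<partial>S1\<bar>" by (metis abs_mult abs_of_nonneg pi_ge_zero zero_le_mult_iff zero_le_numeral)
  also have "\<dots> \<le> (\<integral>y. \<bar>F x - F y\<bar> \<partial>S1)" by (rule integral_abs_bound)
  also have "\<dots> \<le> (\<integral>y. (\<integral>y. \<bar>h y\<bar> \<partial>S1) \<partial>S1)"
    using Fi pt by (intro integral_mono) auto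
  also have "\<dots> = 2*pi*(\<integral>y. \<bar>h y\<bar> \<partial>S1)" by simp
  finally show ?thesis by simp
qed

lemma amgm_abs: "l > 0 \<Longrightarrow> \<bar>t::real\<bar> \<le> (l + t^2 / l) / 2"
proof -
  assume l: "l > 0"
  have "0 \<le> (l - \<bar>t\<bar>)^2" by simp
  hence "2 * l * \<bar>t\<bar> \<le> l^2 + t^2" by (simp add: power2_eq_square algebra_simps)
  hence "2 * l * \<bar>t\<bar> / l \<le> (l^2 + t^2) / l" using l by (intro divide_right_mono) auto
  thus ?thesis using l by (simp add: power2_eq_square field_simps)
qed

lemma L1_L2:
  assumes Fi: "integrable S1 (F::real\<Rightarrow>real)" and F2: "integrable S1 (\<lambda>x. (F x)^2)" and l: "l > 0"
  shows "(\<integral>x. \<bar>F x\<bar> \<partial>S1) \<le> (2*pi*l + (\<integral>x. (F x)^2 \<partial>S1) / l) / 2"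
proof -
  have "(\<integral>x. \<bar>F x\<bar> \<partial>S1) \<le> (\<integral>x. (l + (F x)^2 / l) / 2 \<partial>S1)"
    using Fi F2 amgm_abs[OF l] by (intro integral_mono) auto
  also have "\<dots> = (2*pi*l + (\<integral>x. (F x)^2 \<partial>S1) / l) / 2"
    using F2 by simp
  finally show ?thesis .
qed

lemma core_estimate:
  fixes u u1 u2 V :: "real \<Rightarrow> real" and \<epsilon> m B :: real
  assumes eps: "\<epsilon> > 0" and m: "m > 0"
    and Vm[measurable]: "V \<in> borel_measurable S1"
    and Vlow: "AE x in S1. V x \<ge> m" and Vup: "AE x in S1. \<bar>V x\<bar> \<le> B"
    and ui: "integrable S1 u" and u1i: "integrable S1 u1" and u2i: "integrable S1 u2"
    and w1: "weak_deriv u u1" and w2: "weak_deriv u1 u2"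
  shows "AE x in S1. \<bar>u x\<bar> \<le> (\<integral>x. \<bar>- (\<epsilon>^2) * u2 x + V x * u x\<bar> \<partial>S1) * (1/(2*pi*m) + 2*pi/\<epsilon>^2)"
    and "AE x in S1. \<bar>u1 x\<bar> \<le> (2*pi*B*((\<integral>x. \<bar>- (\<epsilon>^2) * u2 x + V x * u x\<bar> \<partial>S1) * (1/(2*pi*m) + 2*pi/\<epsilon>^2))
                                   + (\<integral>x. \<bar>- (\<epsilon>^2) * u2 x + V x * u x\<bar> \<partial>S1)) / \<epsilon>^2"
proof -
  define f where "f = (\<lambda>x. - (\<epsilon>^2) * u2 x + V x * u x)"
  define F1 where "F1 = (\<integral>x. \<bar>f x\<bar> \<partial>S1)"
  define K0 where "K0 = 1/(2*pi*m) + 2*pi/\<epsilon>^2"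
  have um[measurable]: "u \<in> borel_measurable S1" using ui by simp
  have u1m[measurable]: "u1 \<in> borel_measurable S1" using u1i by simp
  have u2m[measurable]: "u2 \<in> borel_measurable S1" using u2i by simp
  have B0: "B \<ge> 0"
    by (rule AE_S1_const) (use Vup in \<open>auto elim!: eventually_mono\<close>)
  have Vui: "integrable S1 (\<lambda>x. V x * u x)"
  proof (rule integrable_S1_bound[of "\<lambda>x. B * u x"])
    show "integrable S1 (\<lambda>x. B * u x)" using ui by simp
    show "AE x in S1. \<bar>V x * u x\<bar> \<le> \<bar>B * u x\<bar>"
      using Vup by (auto elim!: eventually_mono simp: abs_mult B0 mult_right_mono)
  qed simp
  have fi: "integrable S1 f" unfolding f_def using u2i Vui by simp
  have fm[measurable]: "f \<in> borel_measurable S1" using fi by simp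
  have F10: "F1 \<ge> 0" unfolding F1_def by simp
  obtain c0 where c0: "AE x in S1. u x = c0 + prim u1 x" using rep(2)[OF ui u1i w1] by blast
  have int1: "(\<integral>x. u1 x \<partial>S1) = 0" using rep(1)[OF ui u1i w1] .
  obtain a0 where a0: "AE x in S1. u1 x = a0 + prim u2 x" using rep(2)[OF u1i u2i w2] by blast
  have int2: "(\<integral>x. u2 x \<partial>S1) = 0" using rep(1)[OF u1i u2i w2] .
  define u1t where "u1t = (\<lambda>x. a0 + prim u2 x)"
  define ut where "ut = (\<lambda>x. c0 + prim u1t x)"
  have u1tc: "continuous_on {-pi..pi} u1t" unfolding u1t_def by (intro continuous_intros prim_cont u2i)
  have u1ti: "integrable S1 u1t" by (rule integrable_S1_cont[OF u1tc])
  have u1tm[measurable]: "u1t \<in> borel_measurable S1" using u1ti by simp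
  have e1: "AE x in S1. u1 x = u1t x" using a0 unfolding u1t_def .
  have utc: "continuous_on {-pi..pi} ut" unfolding ut_def by (intro continuous_intros prim_cont u1ti)
  have uti: "integrable S1 ut" by (rule integrable_S1_cont[OF utc])
  have utm[measurable]: "ut \<in> borel_measurable S1" using uti by simp
  have e0: "AE x in S1. u x = ut x"
    unfolding ut_def
  proof (rule eventually_mono[OF eventually_conj[OF c0 AE_space]])
    fix x assume "u x = c0 + prim u1 x \<and> x \<in> space S1"
    thus "u x = c0 + prim u1t x" using prim_cong[OF u1i u1ti e1] by simp
  qed
  have int1t: "(\<integral>x. u1t x \<partial>S1) = 0"
    using int1 integral_cong_AE[of u1 S1 u1t] e1 by simp
  have u1t2: "integrable S1 (\<lambda>x. (u1t x)^2)"
    unfolding power2_eq_square by (rule integrable_S1_mult_cont[OF u1ti u1tc])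
  have ut2: "integrable S1 (\<lambda>x. (ut x)^2)"
    unfolding power2_eq_square by (rule integrable_S1_mult_cont[OF uti utc])
  define A2 where "A2 = (\<integral>x. (u1t x)^2 \<partial>S1)"
  define B2 where "B2 = (\<integral>x. (ut x)^2 \<partial>S1)"
  have A20: "A2 \<ge> 0" unfolding A2_def by simp
  have B20: "B2 \<ge> 0" unfolding B2_def by simp
  have u2ut: "(\<integral>x. u2 x * ut x \<partial>S1) = - A2"
  proof -
    have pl: "(\<integral>x. u2 x * prim u1t x \<partial>S1) + (\<integral>x. prim u2 x * u1t x \<partial>S1) = 0"
      using product_lemma[OF u2i u1ti] int2 by simp
    have i1: "integrable S1 (\<lambda>x. u2 x * prim u1t x)"
      by (rule integrable_S1_mult_cont[OF u2i prim_cont[OF u1ti]])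
    have "(\<integral>x. u2 x * ut x \<partial>S1) = (\<integral>x. c0 * u2 x + u2 x * prim u1t x \<partial>S1)"
      by (rule Bochner_Integration.integral_cong) (auto simp: ut_def algebra_simps)
    also have "\<dots> = (\<integral>x. u2 x * prim u1t x \<partial>S1)" using i1 u2i int2 by simp
    finally have a: "(\<integral>x. u2 x * ut x \<partial>S1) = (\<integral>x. u2 x * prim u1t x \<partial>S1)" .
    have "(\<integral>x. prim u2 x * u1t x \<partial>S1) = (\<integral>x. (u1t x)^2 - a0 * u1t x \<partial>S1)"
      by (rule Bochner_Integration.integral_cong) (auto simp: u1t_def power2_eq_square algebra_simps)
    also have "\<dots> = A2" using u1t2 u1ti int1t unfolding A2_def by simp
    finally show ?thesis using a pl by simp
  qed
  have fut: "(\<integral>x. f x * ut x \<partial>S1) = \<epsilon>^2 * A2 + (\<integral>x. V x * (ut x)^2 \<partial>S1)"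
  proof -
    have Vut2: "integrable S1 (\<lambda>x. V x * (ut x)^2)"
    proof (rule integrable_S1_bound[of "\<lambda>x. B * (ut x)^2"])
      show "integrable S1 (\<lambda>x. B * (ut x)^2)" using ut2 by simp
      show "AE x in S1. \<bar>V x * (ut x)^2\<bar> \<le> \<bar>B * (ut x)^2\<bar>"
        using Vup by (auto elim!: eventually_mono simp: abs_mult B0 mult_right_mono)
    qed simp
    have i2: "integrable S1 (\<lambda>x. u2 x * ut x)" by (rule integrable_S1_mult_cont[OF u2i utc])
    have "(\<integral>x. f x * ut x \<partial>S1) = (\<integral>x. - (\<epsilon>^2) * (u2 x * ut x) + V x * (ut x)^2 \<partial>S1)"
      by (rule integral_cong_AE) (use e0 in \<open>auto simp: f_def power2_eq_square algebra_simps elim!: eventually_mono\<close>)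
    also have "\<dots> = - (\<epsilon>^2) * (\<integral>x. u2 x * ut x \<partial>S1) + (\<integral>x. V x * (ut x)^2 \<partial>S1)"
      using i2 Vut2 by simp
    finally show ?thesis using u2ut by simp
  qed
  have Vlowint: "m * B2 \<le> (\<integral>x. V x * (ut x)^2 \<partial>S1)"
  proof -
    have Vut2: "integrable S1 (\<lambda>x. V x * (ut x)^2)"
    proof (rule integrable_S1_bound[of "\<lambda>x. B * (ut x)^2"])
      show "integrable S1 (\<lambda>x. B * (ut x)^2)" using ut2 by simp
      show "AE x in S1. \<bar>V x * (ut x)^2\<bar> \<le> \<bar>B * (ut x)^2\<bar>"
        using Vup by (auto elim!: eventually_mono simp: abs_mult B0 mult_right_mono)
    qed simp
    have "m * B2 = (\<integral>x. m * (ut x)^2 \<partial>S1)" unfolding B2_def by simp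
    also have "\<dots> \<le> (\<integral>x. V x * (ut x)^2 \<partial>S1)"
      using ut2 Vut2 Vlow by (intro integral_mono_AE) (auto elim!: eventually_mono intro: mult_right_mono)
    finally show ?thesis .
  qed
  define S0 where "S0 = (\<integral>x. \<bar>ut x\<bar> \<partial>S1) / (2*pi) + (\<integral>x. \<bar>u1t x\<bar> \<partial>S1)"
  have S00: "S0 \<ge> 0" unfolding S0_def by (intro add_nonneg_nonneg divide_nonneg_pos) auto
  have utb: "\<bar>ut x\<bar> \<le> S0" if x: "x \<in> {-pi..pi}" for x
  proof -
    have "2*pi*\<bar>ut x\<bar> \<le> (\<integral>y. \<bar>ut y\<bar> \<partial>S1) + 2*pi*(\<integral>y. \<bar>u1t y\<bar> \<partial>S1)"
      by (rule sup_bound_prim[OF u1ti uti _ x]) (simp add: ut_def)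
    thus ?thesis unfolding S0_def by (simp add: field_simps)
  qed
  have futle: "(\<integral>x. f x * ut x \<partial>S1) \<le> F1 * S0"
  proof -
    have "(\<integral>x. f x * ut x \<partial>S1) \<le> (\<integral>x. \<bar>f x\<bar> * S0 \<partial>S1)"
    proof (rule integral_mono)
      show "integrable S1 (\<lambda>x. f x * ut x)" by (rule integrable_S1_mult_cont[OF fi utc])
      show "integrable S1 (\<lambda>x. \<bar>f x\<bar> * S0)" using fi by simp
      fix x assume "x \<in> space S1"
      hence "\<bar>ut x\<bar> \<le> S0" using utb by simp
      hence "\<bar>f x\<bar> * \<bar>ut x\<bar> \<le> \<bar>f x\<bar> * S0" by (intro mult_left_mono) auto
      thus "f x * ut x \<le> \<bar>f x\<bar> * S0" by (metis abs_ge_self abs_mult order_trans)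
    qed
    thus ?thesis unfolding F1_def by simp
  qed
  have energy: "\<epsilon>^2 * A2 + m * B2 \<le> F1 * S0" using fut Vlowint futle by linarith
  have S0le: "S0 \<le> (F1 + d) * K0" if d: "d > 0" for d
  proof -
    define D where "D = F1 + d"
    have D: "D > 0" unfolding D_def using F10 d by simp
    define l where "l = D / (2*pi*m)"
    define \<mu> where "\<mu> = D / \<epsilon>^2"
    have l0: "l > 0" unfolding l_def using D m by simp
    have \<mu>0: "\<mu> > 0" unfolding \<mu>_def using D eps by simp
    have a: "(\<integral>x. \<bar>ut x\<bar> \<partial>S1) \<le> (2*pi*l + B2 / l) / 2"
      unfolding B2_def by (rule L1_L2[OF uti ut2 l0])
    have b: "(\<integral>x. \<bar>u1t x\<bar> \<partial>S1) \<le> (2*pi*\<mu> + A2 / \<mu>) / 2"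
      unfolding A2_def by (rule L1_L2[OF u1ti u1t2 \<mu>0])
    have a2: "(\<integral>x. \<bar>ut x\<bar> \<partial>S1) / (2*pi) \<le> (2*pi*l + B2 / l) / 2 / (2*pi)"
      using a by (rule divide_right_mono) simp
    have "S0 \<le> (2*pi*l + B2 / l) / 2 / (2*pi) + (2*pi*\<mu> + A2 / \<mu>) / 2"
      unfolding S0_def using a2 b by (rule add_mono)
    also have "\<dots> = l/2 + pi*\<mu> + (m * B2 + \<epsilon>^2 * A2) / (2*D)"
      unfolding l_def \<mu>_def using D m eps by (simp add: field_simps)
    also have "(m * B2 + \<epsilon>^2 * A2) / (2*D) \<le> (F1 * S0) / (2*D)"
      using energy D by (intro divide_right_mono) auto
    also have "(F1 * S0) / (2*D) \<le> (D * S0) / (2*D)"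
      using D S00 unfolding D_def using d by (intro divide_right_mono mult_right_mono) auto
    also have "(D * S0) / (2*D) = S0 / 2" using D by simp
    finally have "S0 \<le> l/2 + pi*\<mu> + S0/2" by simp
    hence "S0 \<le> l + 2*pi*\<mu>" by simp
    also have "\<dots> = D * K0" unfolding l_def \<mu>_def K0_def using m eps by (simp add: field_simps)
    finally show ?thesis unfolding D_def .
  qed
  have K00: "K0 > 0" unfolding K0_def using m eps by (intro add_pos_pos) auto
  have S0F: "S0 \<le> F1 * K0"
  proof (rule ccontr)
    assume "\<not> S0 \<le> F1 * K0"
    hence g: "S0 - F1 * K0 > 0" by simp
    define d where "d = (S0 - F1 * K0) / (2 * K0)"
    have d: "d > 0" unfolding d_def using g K00 by simp
    have "S0 \<le> F1 * K0 + d * K0" using S0le[OF d] by (simp add: distrib_right)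
    also have "d * K0 = (S0 - F1 * K0) / 2" unfolding d_def using K00 by simp
    finally have "S0 \<le> F1 * K0 + (S0 - F1 * K0) / 2" .
    thus False using g by (simp add: field_simps)
  qed
  show "AE x in S1. \<bar>u x\<bar> \<le> (\<integral>x. \<bar>- (\<epsilon>^2) * u2 x + V x * u x\<bar> \<partial>S1) * (1/(2*pi*m) + 2*pi/\<epsilon>^2)"
  proof (rule eventually_mono[OF eventually_conj[OF e0 AE_space]])
    fix x assume "u x = ut x \<and> x \<in> space S1"
    thus "\<bar>u x\<bar> \<le> (\<integral>x. \<bar>- (\<epsilon>^2) * u2 x + V x * u x\<bar> \<partial>S1) * (1/(2*pi*m) + 2*pi/\<epsilon>^2)"
      using utb[of x] S0F unfolding F1_def f_def K0_def by simp
  qed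
  have ub: "AE x in S1. \<bar>u x\<bar> \<le> F1 * K0"
  proof (rule eventually_mono[OF eventually_conj[OF e0 AE_space]])
    fix x assume a: "u x = ut x \<and> x \<in> space S1"
    have "\<bar>ut x\<bar> \<le> S0" using a utb by simp
    thus "\<bar>u x\<bar> \<le> F1 * K0" using a S0F by simp
  qed
  have u2eq: "AE x in S1. \<bar>u2 x\<bar> \<le> (B * (F1 * K0) + \<bar>f x\<bar>) / \<epsilon>^2"
  proof (rule eventually_mono[OF eventually_conj[OF ub Vup]])
    fix x assume a: "\<bar>u x\<bar> \<le> F1 * K0 \<and> \<bar>V x\<bar> \<le> B"
    have "u2 x = (V x * u x - f x) / \<epsilon>^2" unfolding f_def using eps by (simp add: field_simps)
    hence "\<bar>u2 x\<bar> = \<bar>V x * u x - f x\<bar> / \<epsilon>^2" by simp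
    also have "\<bar>V x * u x - f x\<bar> \<le> \<bar>V x\<bar> * \<bar>u x\<bar> + \<bar>f x\<bar>" by (simp add: abs_mult[symmetric] abs_triangle_ineq4)
    also have "\<bar>V x\<bar> * \<bar>u x\<bar> \<le> B * (F1 * K0)" using a B0 by (intro mult_mono) auto
    finally show "\<bar>u2 x\<bar> \<le> (B * (F1 * K0) + \<bar>f x\<bar>) / \<epsilon>^2" using eps by (simp add: divide_right_mono)
  qed
  have intu2: "(\<integral>x. \<bar>u2 x\<bar> \<partial>S1) \<le> (2*pi*B*(F1*K0) + F1) / \<epsilon>^2"
  proof -
    have "(\<integral>x. \<bar>u2 x\<bar> \<partial>S1) \<le> (\<integral>x. (B * (F1 * K0) + \<bar>f x\<bar>) / \<epsilon>^2 \<partial>S1)"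
      using u2i fi u2eq by (intro integral_mono_AE) auto
    also have "\<dots> = (2*pi*B*(F1*K0) + F1) / \<epsilon>^2" using fi unfolding F1_def by (simp add: add_divide_distrib)
    finally show ?thesis .
  qed
  have u1tb: "\<bar>u1t x\<bar> \<le> (\<integral>x. \<bar>u2 x\<bar> \<partial>S1)" if x: "x \<in> {-pi..pi}" for x
    by (rule sup_bound_mean0[OF u2i u1ti _ x int1t]) (simp add: u1t_def)
  show "AE x in S1. \<bar>u1 x\<bar> \<le> (2*pi*B*((\<integral>x. \<bar>- (\<epsilon>^2) * u2 x + V x * u x\<bar> \<partial>S1) * (1/(2*pi*m) + 2*pi/\<epsilon>^2))
                                   + (\<integral>x. \<bar>- (\<epsilon>^2) * u2 x + V x * u x\<bar> \<partial>S1)) / \<epsilon>^2"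
  proof (rule eventually_mono[OF eventually_conj[OF e1 AE_space]])
    fix x assume "u1 x = u1t x \<and> x \<in> space S1"
    thus "\<bar>u1 x\<bar> \<le> (2*pi*B*((\<integral>x. \<bar>- (\<epsilon>^2) * u2 x + V x * u x\<bar> \<partial>S1) * (1/(2*pi*m) + 2*pi/\<epsilon>^2))
                                   + (\<integral>x. \<bar>- (\<epsilon>^2) * u2 x + V x * u x\<bar> \<partial>S1)) / \<epsilon>^2"
      using u1tb[of x] intu2 unfolding F1_def f_def K0_def by simp
  qed
qed




lemma prim_cong_pw: "(\<And>t. t \<in> {-pi..x} \<Longrightarrow> h t = h' t) \<Longrightarrow> prim h x = prim h' x"
  unfolding prim_def by (rule integral_cong) auto

definition Top :: "(real \<Rightarrow> real) \<Rightarrow> (real \<Rightarrow> real) \<Rightarrow> real \<Rightarrow> real" where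
  "Top c w = prim (prim (\<lambda>t. c t * w t))"

lemma Top_cont:
  assumes c: "integrable S1 c" and w: "continuous_on {-pi..pi} w"
  shows "continuous_on {-pi..pi} (Top c w)"
proof -
  have i: "integrable S1 (\<lambda>t. c t * w t)" by (rule integrable_S1_mult_cont[OF c w])
  have "integrable S1 (prim (\<lambda>t. c t * w t))" by (rule integrable_S1_cont[OF prim_cont[OF i]])
  thus ?thesis unfolding Top_def by (rule prim_cont)
qed

lemma poly_int:
  assumes s: "s \<ge> -pi"
  shows "integral {-pi..s} (\<lambda>t. C * (t+pi)^k / fact k) = C * (s+pi)^Suc k / fact (Suc k)"
proof -
  have "((\<lambda>t. C * (t+pi)^k / fact k) has_integral (C * (s+pi)^Suc k / fact (Suc k) - C * (-pi+pi)^Suc k / fact (Suc k))) {-pi..s}"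
  proof (rule fundamental_theorem_of_calculus[OF s])
    fix t assume "t \<in> {-pi..s}"
    have "((\<lambda>t. C * (t+pi)^Suc k / fact (Suc k)) has_real_derivative
            C * (real (Suc k) * (t+pi)^k * 1) / fact (Suc k)) (at t within {-pi..s})"
      by (intro derivative_eq_intros) auto
    moreover have "C * (real (Suc k) * (t+pi)^k * 1) / fact (Suc k) = C * (t+pi)^k / fact k"
      by (simp add: fact_Suc field_simps del: of_nat_Suc)
    ultimately show "((\<lambda>t. C * (t+pi)^Suc k / fact (Suc k)) has_vector_derivative C * (t+pi)^k / fact k) (at t within {-pi..s})"
      by (simp add: has_real_derivative_iff_has_vector_derivative)
  qed
  hence "integral {-pi..s} (\<lambda>t. C * (t+pi)^k / fact k) = C * (s+pi)^Suc k / fact (Suc k) - C * (-pi+pi)^Suc k / fact (Suc k)"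
    by (rule integral_unique)
  thus ?thesis by simp
qed

lemma Top_bound:
  assumes c: "integrable S1 c" and cb: "AE t in S1. \<bar>c t\<bar> \<le> L" and L: "L \<ge> 0"
    and w: "continuous_on {-pi..pi} w"
    and wb: "\<And>t. t \<in> {-pi..pi} \<Longrightarrow> \<bar>w t\<bar> \<le> K * (t+pi)^k / fact k"
    and x: "x \<in> {-pi..pi}"
  shows "\<bar>Top c w x\<bar> \<le> (K*L) * (x+pi)^(Suc (Suc k)) / fact (Suc (Suc k))"
proof -
  have i: "integrable S1 (\<lambda>t. c t * w t)" by (rule integrable_S1_mult_cont[OF c w])
  have b1: "AE t in S1. \<bar>c t * w t\<bar> \<le> (K*L) * (t+pi)^k / fact k"
  proof (rule eventually_mono[OF eventually_conj[OF cb AE_space]])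
    fix t assume a: "\<bar>c t\<bar> \<le> L \<and> t \<in> space S1"
    have "\<bar>c t * w t\<bar> = \<bar>c t\<bar> * \<bar>w t\<bar>" by (simp add: abs_mult)
    also have "\<dots> \<le> L * (K * (t+pi)^k / fact k)" using a wb[of t] L by (intro mult_mono) auto
    finally show "\<bar>c t * w t\<bar> \<le> (K*L) * (t+pi)^k / fact k" by (simp add: field_simps)
  qed
  have bc1: "continuous_on {-pi..pi} (\<lambda>t. (K*L) * (t+pi)^k / fact k)" by (intro continuous_intros) auto
  have p1: "\<bar>prim (\<lambda>t. c t * w t) s\<bar> \<le> (K*L) * (s+pi)^Suc k / fact (Suc k)" if s: "s \<in> {-pi..pi}" for s
    using prim_ge_bound[OF i s b1 bc1] poly_int[of s "K*L" k] s by simp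
  have pi1: "integrable S1 (prim (\<lambda>t. c t * w t))" by (rule integrable_S1_cont[OF prim_cont[OF i]])
  have b2: "AE s in S1. \<bar>prim (\<lambda>t. c t * w t) s\<bar> \<le> (K*L) * (s+pi)^Suc k / fact (Suc k)"
    by (rule AE_S1_I) (rule p1)
  have bc2: "continuous_on {-pi..pi} (\<lambda>t. (K*L) * (t+pi)^Suc k / fact (Suc k))" by (intro continuous_intros) auto
  show ?thesis
    using prim_ge_bound[OF pi1 x b2 bc2] poly_int[of x "K*L" "Suc k"] x unfolding Top_def by simp
qed

lemma iter_cont:
  assumes c: "integrable S1 c" and w: "continuous_on {-pi..pi} w"
  shows "continuous_on {-pi..pi} ((Top c ^^ n) w)"
  by (induction n) (auto intro: Top_cont[OF c] w)

lemma iter_bound: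
  assumes c: "integrable S1 c" and cb: "AE t in S1. \<bar>c t\<bar> \<le> L" and L: "L \<ge> 0"
    and w: "continuous_on {-pi..pi} w" and wb: "\<And>t. t \<in> {-pi..pi} \<Longrightarrow> \<bar>w t\<bar> \<le> K0"
  shows "x \<in> {-pi..pi} \<Longrightarrow> \<bar>(Top c ^^ n) w x\<bar> \<le> (K0 * L^n) * (x+pi)^(2*n) / fact (2*n)"
proof (induction n arbitrary: x)
  case 0 thus ?case using wb by simp
next
  case (Suc n)
  have "\<bar>Top c ((Top c ^^ n) w) x\<bar> \<le> ((K0 * L^n)*L) * (x+pi)^(Suc (Suc (2*n))) / fact (Suc (Suc (2*n)))"
    by (rule Top_bound[OF c cb L iter_cont[OF c w] Suc.IH Suc.prems])
  thus ?case by (simp add: mult.assoc mult.commute mult.left_commute)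
qed

definition Mseq :: "real \<Rightarrow> real \<Rightarrow> nat \<Rightarrow> real" where
  "Mseq K0 L n = K0 * (L*(2*pi)^2)^n / fact n"

lemma Mseq_summable: "summable (Mseq K0 L)"
proof -
  have "summable (\<lambda>n. K0 * (inverse (fact n) * (L*(2*pi)^2)^n))"
    by (intro summable_mult summable_exp)
  thus ?thesis unfolding Mseq_def by (simp add: field_simps)
qed

lemma Mseq_nonneg: "K0 \<ge> 0 \<Longrightarrow> L \<ge> 0 \<Longrightarrow> Mseq K0 L n \<ge> 0"
  unfolding Mseq_def by simp

lemma iter_unif:
  assumes c: "integrable S1 c" and cb: "AE t in S1. \<bar>c t\<bar> \<le> L" and L: "L \<ge> 0"
    and w: "continuous_on {-pi..pi} w" and wb: "\<And>t. t \<in> {-pi..pi} \<Longrightarrow> \<bar>w t\<bar> \<le> K0"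
    and x: "x \<in> {-pi..pi}"
  shows "\<bar>(Top c ^^ n) w x\<bar> \<le> Mseq K0 L n"
proof -
  have K0: "K0 \<ge> 0" using wb[of 0] by (smt (verit) atLeastAtMost_iff pi_ge_zero)
  have a: "\<bar>(Top c ^^ n) w x\<bar> \<le> (K0 * L^n) * (x+pi)^(2*n) / fact (2*n)"
    by (rule iter_bound[OF c cb L w wb x])
  have "(x+pi)^(2*n) \<le> (2*pi)^(2*n)" using x by (intro power_mono) auto
  also have "\<dots> = ((2*pi)^2)^n" by (simp add: power_mult)
  finally have b: "(x+pi)^(2*n) \<le> ((2*pi)^2)^n" .
  have f: "fact n \<le> (fact (2*n) :: real)" by (intro fact_mono) auto
  have "(K0 * L^n) * (x+pi)^(2*n) / fact (2*n) \<le> (K0 * L^n) * ((2*pi)^2)^n / fact (2*n)"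
    using b K0 L x by (intro divide_right_mono mult_left_mono) auto
  also have "\<dots> \<le> (K0 * L^n) * ((2*pi)^2)^n / fact n"
    using f K0 L by (intro divide_left_mono) (auto intro: mult_pos_pos)
  also have "\<dots> = Mseq K0 L n" unfolding Mseq_def by (simp add: power_mult_distrib)
  finally show ?thesis using a by simp
qed

definition Sol :: "(real \<Rightarrow> real) \<Rightarrow> (real \<Rightarrow> real) \<Rightarrow> real \<Rightarrow> real" where
  "Sol c w x = (\<Sum>n. (Top c ^^ n) w x)"

lemma cont_bounded_I:
  assumes "continuous_on {-pi..pi} (w::real\<Rightarrow>real)"
  obtains K0 where "\<And>t. t \<in> {-pi..pi} \<Longrightarrow> \<bar>w t\<bar> \<le> K0"
proof -
  obtain B where B: "\<forall>y\<in>w ` {-pi..pi}. norm y \<le> B"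
    using compact_imp_bounded[OF compact_continuous_image[OF assms compact_Icc]]
    unfolding bounded_iff by blast
  show ?thesis by (rule that[of B]) (use B in auto)
qed

lemma Sol_summable:
  assumes c: "integrable S1 c" and cb: "AE t in S1. \<bar>c t\<bar> \<le> L" and L: "L \<ge> 0"
    and w: "continuous_on {-pi..pi} w" and x: "x \<in> {-pi..pi}"
  shows "summable (\<lambda>n. (Top c ^^ n) w x)"
proof -
  obtain K0 where wb: "\<And>t. t \<in> {-pi..pi} \<Longrightarrow> \<bar>w t\<bar> \<le> K0" using cont_bounded_I[OF w] by blast
  show ?thesis
    by (rule summable_comparison_test[OF _ Mseq_summable[of K0 L]])
       (use iter_unif[OF c cb L w wb x] in auto)
qed

lemma Sol_cont:
  assumes c: "integrable S1 c" and cb: "AE t in S1. \<bar>c t\<bar> \<le> L" and L: "L \<ge> 0"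
    and w: "continuous_on {-pi..pi} w"
  shows "continuous_on {-pi..pi} (Sol c w)"
proof -
  obtain K0 where wb: "\<And>t. t \<in> {-pi..pi} \<Longrightarrow> \<bar>w t\<bar> \<le> K0" using cont_bounded_I[OF w] by blast
  have ul: "uniform_limit {-pi..pi} (\<lambda>n x. \<Sum>i<n. (Top c ^^ i) w x) (Sol c w) sequentially"
    unfolding Sol_def
    by (rule Weierstrass_m_test[OF _ Mseq_summable[of K0 L]]) (use iter_unif[OF c cb L w wb] in auto)
  show ?thesis
    by (rule uniform_limit_theorem[OF _ ul])
       (auto intro!: always_eventually continuous_on_sum iter_cont[OF c w])
qed

lemma prim_suminf:
  fixes f :: "nat \<Rightarrow> real \<Rightarrow> real"
  assumes fi: "\<And>n. integrable S1 (f n)" and fb: "\<And>n. AE t in S1. \<bar>f n t\<bar> \<le> M n"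
    and M: "summable M" and x: "x \<in> {-pi..pi}"
  shows "integrable S1 (\<lambda>t. \<Sum>n. f n t)" "prim (\<lambda>t. \<Sum>n. f n t) x = (\<Sum>n. prim (f n) x)"
proof -
  have M0: "M n \<ge> 0" for n
    by (rule AE_S1_const) (use fb[of n] in \<open>auto elim!: eventually_mono\<close>)
  have fm[measurable]: "f n \<in> borel_measurable S1" for n using fi by simp
  have sn: "AE t in S1. summable (\<lambda>n. norm (f n t))"
  proof -
    have "AE t in S1. \<forall>n. \<bar>f n t\<bar> \<le> M n" using fb by (simp add: AE_all_countable)
    thus ?thesis by (elim eventually_mono) (auto intro: summable_comparison_test[OF _ M])
  qed
  have si: "summable (\<lambda>n. \<integral>t. norm (f n t) \<partial>S1)"
  proof (rule summable_comparison_test[OF _ summable_mult[OF M, of "2*pi"]])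
    show "\<exists>N. \<forall>n\<ge>N. norm (\<integral>t. norm (f n t) \<partial>S1) \<le> 2*pi * M n"
    proof (intro exI allI impI)
      fix n
      have "(\<integral>t. norm (f n t) \<partial>S1) \<le> (\<integral>t. M n \<partial>S1)"
        using fi fb[of n] by (intro integral_mono_AE) auto
      thus "norm (\<integral>t. norm (f n t) \<partial>S1) \<le> 2*pi * M n" by simp
    qed
  qed
  show I: "integrable S1 (\<lambda>t. \<Sum>n. f n t)" by (rule integrable_suminf[OF fi sn si])
  define g where "g = (\<lambda>n t. indicator {..x} t * f n t)"
  have gi: "integrable S1 (g n)" for n unfolding g_def by (rule integrable_S1_ind_mult[OF fi])
  have gsn: "AE t in S1. summable (\<lambda>n. norm (g n t))"
    using sn by (elim eventually_mono) (auto simp: g_def indicator_def)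
  have gsi: "summable (\<lambda>n. \<integral>t. norm (g n t) \<partial>S1)"
  proof (rule summable_comparison_test[OF _ si])
    show "\<exists>N. \<forall>n\<ge>N. norm (\<integral>t. norm (g n t) \<partial>S1) \<le> (\<integral>t. norm (f n t) \<partial>S1)"
    proof (intro exI allI impI)
      fix n
      have "(\<integral>t. norm (g n t) \<partial>S1) \<le> (\<integral>t. norm (f n t) \<partial>S1)"
        using gi fi by (intro integral_mono) (auto simp: g_def indicator_def)
      thus "norm (\<integral>t. norm (g n t) \<partial>S1) \<le> (\<integral>t. norm (f n t) \<partial>S1)" by simp
    qed
  qed
  have "prim (\<lambda>t. \<Sum>n. f n t) x = (\<integral>t. indicator {..x} t * (\<Sum>n. f n t) \<partial>S1)"
    by (rule prim_eq_L[OF I x])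
  also have "\<dots> = (\<integral>t. (\<Sum>n. g n t) \<partial>S1)"
  proof (rule integral_cong_AE)
    show "AE t in S1. indicator {..x} t * (\<Sum>n. f n t) = (\<Sum>n. g n t)"
      using sn by (elim eventually_mono) (auto simp: g_def suminf_mult summable_norm_cancel)
  qed (use I integrable_suminf[OF gi gsn gsi] in auto)
  also have "\<dots> = (\<Sum>n. \<integral>t. g n t \<partial>S1)" by (rule integral_suminf[OF gi gsn gsi])
  also have "\<dots> = (\<Sum>n. prim (f n) x)" unfolding g_def using prim_eq_L[OF fi x] by simp
  finally show "prim (\<lambda>t. \<Sum>n. f n t) x = (\<Sum>n. prim (f n) x)" .
qed




lemma Top_cong:
  assumes e: "\<And>t. t \<in> {-pi..pi} \<Longrightarrow> w t = w' t" and x: "x \<in> {-pi..pi}"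
  shows "Top c w x = Top c w' x"
  unfolding Top_def
proof (rule prim_cong_pw)
  fix s assume s: "s \<in> {-pi..x}"
  show "prim (\<lambda>t. c t * w t) s = prim (\<lambda>t. c t * w' t) s"
    by (rule prim_cong_pw) (use e s x in auto)
qed

lemma Top_lin:
  assumes c: "integrable S1 c" and w: "continuous_on {-pi..pi} w" and w': "continuous_on {-pi..pi} w'"
    and x: "x \<in> {-pi..pi}"
  shows "Top c (\<lambda>t. a * w t + b * w' t) x = a * Top c w x + b * Top c w' x"
proof -
  have i1: "integrable S1 (\<lambda>t. c t * w t)" by (rule integrable_S1_mult_cont[OF c w])
  have i2: "integrable S1 (\<lambda>t. c t * w' t)" by (rule integrable_S1_mult_cont[OF c w'])
  have inner: "prim (\<lambda>t. c t * (a * w t + b * w' t)) s = a * prim (\<lambda>t. c t * w t) s + b * prim (\<lambda>t. c t * w' t) s"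
    if s: "s \<le> pi" for s
  proof -
    have "prim (\<lambda>t. c t * (a * w t + b * w' t)) s = prim (\<lambda>t. a * (c t * w t) + b * (c t * w' t)) s"
      by (simp add: algebra_simps)
    also have "\<dots> = prim (\<lambda>t. a * (c t * w t)) s + prim (\<lambda>t. b * (c t * w' t)) s"
      by (rule prim_add) (use i1 i2 s in auto)
    also have "\<dots> = a * prim (\<lambda>t. c t * w t) s + b * prim (\<lambda>t. c t * w' t) s"
      by (simp add: prim_cmult)
    finally show ?thesis .
  qed
  have P1: "integrable S1 (prim (\<lambda>t. c t * w t))" by (rule integrable_S1_cont[OF prim_cont[OF i1]])
  have P2: "integrable S1 (prim (\<lambda>t. c t * w' t))" by (rule integrable_S1_cont[OF prim_cont[OF i2]])
  have "Top c (\<lambda>t. a * w t + b * w' t) x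
        = prim (\<lambda>s. a * prim (\<lambda>t. c t * w t) s + b * prim (\<lambda>t. c t * w' t) s) x"
    unfolding Top_def by (rule prim_cong_pw) (use inner x in auto)
  also have "\<dots> = prim (\<lambda>s. a * prim (\<lambda>t. c t * w t) s) x + prim (\<lambda>s. b * prim (\<lambda>t. c t * w' t) s) x"
    by (rule prim_add) (use P1 P2 x in auto)
  also have "\<dots> = a * Top c w x + b * Top c w' x"
    unfolding Top_def by (simp add: prim_cmult)
  finally show ?thesis .
qed

lemma iter_lin:
  assumes c: "integrable S1 c" and w: "continuous_on {-pi..pi} w" and w': "continuous_on {-pi..pi} w'"
  shows "x \<in> {-pi..pi} \<Longrightarrow> (Top c ^^ n) (\<lambda>t. a * w t + b * w' t) x = a * (Top c ^^ n) w x + b * (Top c ^^ n) w' x"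
proof (induction n arbitrary: x)
  case 0 thus ?case by simp
next
  case (Suc n)
  have "(Top c ^^ Suc n) (\<lambda>t. a * w t + b * w' t) x = Top c ((Top c ^^ n) (\<lambda>t. a * w t + b * w' t)) x"
    by simp
  also have "\<dots> = Top c (\<lambda>t. a * (Top c ^^ n) w t + b * (Top c ^^ n) w' t) x"
    by (rule Top_cong) (use Suc in auto)
  also have "\<dots> = a * Top c ((Top c ^^ n) w) x + b * Top c ((Top c ^^ n) w') x"
    by (rule Top_lin[OF c iter_cont[OF c w] iter_cont[OF c w'] Suc.prems])
  finally show ?case by simp
qed

lemma Sol_lin:
  assumes c: "integrable S1 c" and cb: "AE t in S1. \<bar>c t\<bar> \<le> L" and L: "L \<ge> 0"
    and w: "continuous_on {-pi..pi} w" and w': "continuous_on {-pi..pi} w'" and x: "x \<in> {-pi..pi}"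
  shows "Sol c (\<lambda>t. a * w t + b * w' t) x = a * Sol c w x + b * Sol c w' x"
proof -
  have s1: "summable (\<lambda>n. (Top c ^^ n) w x)" by (rule Sol_summable[OF c cb L w x])
  have s2: "summable (\<lambda>n. (Top c ^^ n) w' x)" by (rule Sol_summable[OF c cb L w' x])
  have "Sol c (\<lambda>t. a * w t + b * w' t) x = (\<Sum>n. a * (Top c ^^ n) w x + b * (Top c ^^ n) w' x)"
    unfolding Sol_def using iter_lin[OF c w w' x] by simp
  also have "\<dots> = (\<Sum>n. a * (Top c ^^ n) w x) + (\<Sum>n. b * (Top c ^^ n) w' x)"
    by (rule suminf_add[symmetric]) (auto intro: summable_mult s1 s2)
  also have "\<dots> = a * Sol c w x + b * Sol c w' x"
    unfolding Sol_def using s1 s2 by (simp add: suminf_mult)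
  finally show ?thesis .
qed

lemma Top_Sol:
  assumes c: "integrable S1 c" and cb: "AE t in S1. \<bar>c t\<bar> \<le> L" and L: "L \<ge> 0"
    and w: "continuous_on {-pi..pi} w" and x: "x \<in> {-pi..pi}"
  shows "Top c (Sol c w) x = (\<Sum>n. (Top c ^^ Suc n) w x)"
proof -
  obtain K0 where wb: "\<And>t. t \<in> {-pi..pi} \<Longrightarrow> \<bar>w t\<bar> \<le> K0" using cont_bounded_I[OF w] by blast
  define u where "u = (\<lambda>n. (Top c ^^ n) w)"
  have uc: "continuous_on {-pi..pi} (u n)" for n unfolding u_def by (rule iter_cont[OF c w])
  have ub: "\<bar>u n t\<bar> \<le> Mseq K0 L n" if "t \<in> {-pi..pi}" for n t
    unfolding u_def by (rule iter_unif[OF c cb L w wb that])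
  have Ms: "summable (\<lambda>n. L * Mseq K0 L n)" by (intro summable_mult Mseq_summable)
  have cu: "integrable S1 (\<lambda>t. c t * u n t)" for n by (rule integrable_S1_mult_cont[OF c uc])
  have cub: "AE t in S1. \<bar>c t * u n t\<bar> \<le> L * Mseq K0 L n" for n
  proof (rule eventually_mono[OF eventually_conj[OF cb AE_space]])
    fix t assume a: "\<bar>c t\<bar> \<le> L \<and> t \<in> space S1"
    have "\<bar>c t * u n t\<bar> = \<bar>c t\<bar> * \<bar>u n t\<bar>" by (simp add: abs_mult)
    also have "\<dots> \<le> L * Mseq K0 L n" using a ub[of t n] L by (intro mult_mono) auto
    finally show "\<bar>c t * u n t\<bar> \<le> L * Mseq K0 L n" .
  qed
  have inner: "prim (\<lambda>t. c t * Sol c w t) s = (\<Sum>n. prim (\<lambda>t. c t * u n t) s)" if s: "s \<in> {-pi..pi}" for s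
  proof -
    have "prim (\<lambda>t. c t * Sol c w t) s = prim (\<lambda>t. \<Sum>n. c t * u n t) s"
    proof (rule prim_cong_pw)
      fix t assume t: "t \<in> {-pi..s}"
      hence tI: "t \<in> {-pi..pi}" using s by auto
      show "c t * Sol c w t = (\<Sum>n. c t * u n t)"
        unfolding Sol_def u_def using Sol_summable[OF c cb L w tI] by (simp add: suminf_mult)
    qed
    also have "\<dots> = (\<Sum>n. prim (\<lambda>t. c t * u n t) s)"
      by (rule prim_suminf(2)[OF cu cub Ms s])
    finally show ?thesis .
  qed
  define P where "P = (\<lambda>n. prim (\<lambda>t. c t * u n t))"
  have Pi: "integrable S1 (P n)" for n unfolding P_def by (rule integrable_S1_cont[OF prim_cont[OF cu]])
  have Pb: "AE s in S1. \<bar>P n s\<bar> \<le> 2*pi*(L * Mseq K0 L n)" for n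
  proof (rule AE_S1_I)
    fix s assume s: "s \<in> {-pi..pi}"
    have "\<bar>P n s\<bar> \<le> (\<integral>t. \<bar>c t * u n t\<bar> \<partial>S1)" unfolding P_def by (rule prim_bound[OF cu s])
    also have "\<dots> \<le> (\<integral>t. L * Mseq K0 L n \<partial>S1)"
      using cu cub[of n] by (intro integral_mono_AE) auto
    finally show "\<bar>P n s\<bar> \<le> 2*pi*(L * Mseq K0 L n)" by simp
  qed
  have Ms2: "summable (\<lambda>n. 2*pi*(L * Mseq K0 L n))" by (intro summable_mult Ms)
  have "Top c (Sol c w) x = prim (\<lambda>s. \<Sum>n. P n s) x"
    unfolding Top_def P_def by (rule prim_cong_pw) (use inner x in auto)
  also have "\<dots> = (\<Sum>n. prim (P n) x)" by (rule prim_suminf(2)[OF Pi Pb Ms2 x])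
  also have "\<dots> = (\<Sum>n. (Top c ^^ Suc n) w x)" unfolding P_def u_def Top_def by simp
  finally show ?thesis .
qed

lemma Sol_fix:
  assumes c: "integrable S1 c" and cb: "AE t in S1. \<bar>c t\<bar> \<le> L" and L: "L \<ge> 0"
    and w: "continuous_on {-pi..pi} w" and x: "x \<in> {-pi..pi}"
  shows "Sol c w x = w x + Top c (Sol c w) x"
proof -
  have s: "summable (\<lambda>n. (Top c ^^ n) w x)" by (rule Sol_summable[OF c cb L w x])
  have "(\<Sum>n. (Top c ^^ Suc n) w x) = Sol c w x - w x"
    unfolding Sol_def using suminf_split_head[OF s] by simp
  thus ?thesis using Top_Sol[OF c cb L w x] by simp
qed




lemma Lp_sum_bound:
  assumes p: "p > 1" and a: "Lp p a" and b: "Lp p b" and m: "h \<in> borel_measurable S1"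
    and al: "\<alpha> \<ge> 0" and be: "\<beta> \<ge> 0"
    and bd: "AE x in S1. \<bar>h x\<bar> \<le> \<alpha> * \<bar>a x\<bar> + \<beta> * \<bar>b x\<bar>"
  shows "Lp p h"
proof -
  have ai: "integrable S1 (\<lambda>x. \<bar>a x\<bar> powr p)" using a unfolding Lp_def by auto
  have bi: "integrable S1 (\<lambda>x. \<bar>b x\<bar> powr p)" using b unfolding Lp_def by auto
  have mm[measurable]: "(\<lambda>x. \<bar>h x\<bar> powr p) \<in> borel_measurable S1"
    using m by (rule measurable_abs_powr)
  have pt: "(s + t) powr p \<le> 2 powr p * (s powr p + t powr p)" if "s \<ge> 0" "t \<ge> 0" for s t :: real
  proof -
    have "(s + t) powr p \<le> (2 * max s t) powr p" using that p by (intro powr_mono2) auto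
    also have "\<dots> = 2 powr p * (max s t) powr p" by (simp add: powr_mult)
    also have "(max s t) powr p \<le> s powr p + t powr p"
      by (cases "s \<le> t") (auto simp: max_def)
    finally show ?thesis by simp
  qed
  have bb: "AE x in S1. \<bar>\<bar>h x\<bar> powr p\<bar> \<le> \<bar>2 powr p * (\<alpha> powr p * \<bar>a x\<bar> powr p + \<beta> powr p * \<bar>b x\<bar> powr p)\<bar>"
  proof (rule eventually_mono[OF bd])
    fix x assume hx: "\<bar>h x\<bar> \<le> \<alpha> * \<bar>a x\<bar> + \<beta> * \<bar>b x\<bar>"
    have "\<bar>h x\<bar> powr p \<le> (\<alpha> * \<bar>a x\<bar> + \<beta> * \<bar>b x\<bar>) powr p" using hx p by (intro powr_mono2) auto
    also have "\<dots> \<le> 2 powr p * ((\<alpha> * \<bar>a x\<bar>) powr p + (\<beta> * \<bar>b x\<bar>) powr p)" using al be by (intro pt) auto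
    also have "\<dots> = 2 powr p * (\<alpha> powr p * \<bar>a x\<bar> powr p + \<beta> powr p * \<bar>b x\<bar> powr p)"
      using al be by (simp add: powr_mult)
    finally show "\<bar>\<bar>h x\<bar> powr p\<bar> \<le> \<bar>2 powr p * (\<alpha> powr p * \<bar>a x\<bar> powr p + \<beta> powr p * \<bar>b x\<bar> powr p)\<bar>"
      by simp
  qed
  have ri: "integrable S1 (\<lambda>x. 2 powr p * (\<alpha> powr p * \<bar>a x\<bar> powr p + \<beta> powr p * \<bar>b x\<bar> powr p))"
    using ai bi by simp
  have "integrable S1 (\<lambda>x. \<bar>h x\<bar> powr p)"
    by (rule integrable_S1_bound[OF ri mm bb])
  thus ?thesis using m unfolding Lp_def by simp
qed

lemma existence:
  fixes V g :: "real \<Rightarrow> real"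
  assumes p: "p > 1" and eps: "\<epsilon> > 0" and m: "m > 0"
    and Vm[measurable]: "V \<in> borel_measurable S1"
    and Vlow: "AE x in S1. V x \<ge> m" and Vup: "AE x in S1. \<bar>V x\<bar> \<le> B"
    and g: "Lp p g"
  shows "\<exists>u u1 u2. W2p p u u1 u2 \<and> (AE x in S1. Lop \<epsilon> V u u2 x = g x)"
proof -
  have gi: "integrable S1 g" by (rule Lp_integrable[OF p g])
  have gm[measurable]: "g \<in> borel_measurable S1" using gi by simp
  have B0: "B \<ge> 0"
    by (rule AE_S1_const) (use Vup in \<open>auto elim!: eventually_mono\<close>)
  have e2: "\<epsilon>^2 > 0" using eps by simp
  define c where "c = (\<lambda>t. V t / \<epsilon>^2)"
  define L where "L = B / \<epsilon>^2"
  have L0: "L \<ge> 0" unfolding L_def using B0 eps by simp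
  have cm[measurable]: "c \<in> borel_measurable S1" unfolding c_def by measurable
  have cb: "AE t in S1. \<bar>c t\<bar> \<le> L"
    using Vup e2 by (auto elim!: eventually_mono simp: c_def L_def divide_right_mono)
  have ci: "integrable S1 c" by (rule integrable_S1_bounded[OF cm cb])
  define gg where "gg = (\<lambda>t. g t / \<epsilon>^2)"
  have ggi: "integrable S1 gg" unfolding gg_def using gi by simp
  have pgg: "integrable S1 (prim gg)" by (rule integrable_S1_cont[OF prim_cont[OF ggi]])
  define h0 where "h0 = (\<lambda>x. - prim (prim gg) x)"
  have h0c: "continuous_on {-pi..pi} h0" unfolding h0_def by (intro continuous_intros prim_cont pgg)
  define w1 where "w1 = (\<lambda>x::real. 1::real)"
  define w2 where "w2 = (\<lambda>x::real. x + pi)"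
  have w1c: "continuous_on {-pi..pi} w1" unfolding w1_def by simp
  have w2c: "continuous_on {-pi..pi} w2" unfolding w2_def by (intro continuous_intros)
  define U1 where "U1 = Sol c w1"
  define U2 where "U2 = Sol c w2"
  define U0 where "U0 = Sol c h0"
  have U1c: "continuous_on {-pi..pi} U1" unfolding U1_def by (rule Sol_cont[OF ci cb L0 w1c])
  have U2c: "continuous_on {-pi..pi} U2" unfolding U2_def by (rule Sol_cont[OF ci cb L0 w2c])
  have U0c: "continuous_on {-pi..pi} U0" unfolding U0_def by (rule Sol_cont[OF ci cb L0 h0c])
  have U1f: "U1 x = w1 x + Top c U1 x" if "x \<in> {-pi..pi}" for x
    unfolding U1_def by (rule Sol_fix[OF ci cb L0 w1c that])
  have U2f: "U2 x = w2 x + Top c U2 x" if "x \<in> {-pi..pi}" for x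
    unfolding U2_def by (rule Sol_fix[OF ci cb L0 w2c that])
  have U0f: "U0 x = h0 x + Top c U0 x" if "x \<in> {-pi..pi}" for x
    unfolding U0_def by (rule Sol_fix[OF ci cb L0 h0c that])
  define uu where "uu = (\<lambda>a b r x. a * U1 x + b * U2 x + r * U0 x)"
  define uu2 where "uu2 = (\<lambda>a b r x. c x * uu a b r x - r * gg x)"
  define uu1 where "uu1 = (\<lambda>a b r x. b + prim (uu2 a b r) x)"
  have uuc: "continuous_on {-pi..pi} (uu a b r)" for a b r
    unfolding uu_def by (intro continuous_intros U1c U2c U0c)
  have uu2i: "integrable S1 (uu2 a b r)" for a b r
    unfolding uu2_def using integrable_S1_mult_cont[OF ci uuc] ggi by simp
  have uu1c: "continuous_on {-pi..pi} (uu1 a b r)" for a b r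
    unfolding uu1_def by (intro continuous_intros prim_cont uu2i)
  have uu1i: "integrable S1 (uu1 a b r)" for a b r by (rule integrable_S1_cont[OF uu1c])
  have uui: "integrable S1 (uu a b r)" for a b r by (rule integrable_S1_cont[OF uuc])
  have Tuu: "Top c (uu a b r) x = a * Top c U1 x + b * Top c U2 x + r * Top c U0 x"
    if x: "x \<in> {-pi..pi}" for a b r x
  proof -
    have c12: "continuous_on {-pi..pi} (\<lambda>t. a * U1 t + b * U2 t)" by (intro continuous_intros U1c U2c)
    have "Top c (uu a b r) x = Top c (\<lambda>t. 1 * (a * U1 t + b * U2 t) + r * U0 t) x"
      unfolding uu_def by simp
    also have "\<dots> = 1 * Top c (\<lambda>t. a * U1 t + b * U2 t) x + r * Top c U0 x"
      by (rule Top_lin[OF ci c12 U0c x])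
    also have "Top c (\<lambda>t. a * U1 t + b * U2 t) x = a * Top c U1 x + b * Top c U2 x"
      by (rule Top_lin[OF ci U1c U2c x])
    finally show ?thesis by simp
  qed
  have uurep: "uu a b r x = a + prim (uu1 a b r) x" if x: "x \<in> {-pi..pi}" for a b r x
  proof -
    have cu: "integrable S1 (\<lambda>t. c t * uu a b r t)" by (rule integrable_S1_mult_cont[OF ci uuc])
    have rg: "integrable S1 (\<lambda>t. r * gg t)" using ggi by simp
    have pcu: "integrable S1 (prim (\<lambda>t. c t * uu a b r t))" by (rule integrable_S1_cont[OF prim_cont[OF cu]])
    have prg: "integrable S1 (prim (\<lambda>t. r * gg t))" by (rule integrable_S1_cont[OF prim_cont[OF rg]])
    have p2: "prim (uu2 a b r) s = prim (\<lambda>t. c t * uu a b r t) s - prim (\<lambda>t. r * gg t) s" if "s \<le> pi" for s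
      unfolding uu2_def by (rule prim_diff[OF cu rg that])
    have pp2: "prim (prim (uu2 a b r)) x = Top c (uu a b r) x - r * prim (prim gg) x"
    proof -
      have "prim (prim (uu2 a b r)) x = prim (\<lambda>s. prim (\<lambda>t. c t * uu a b r t) s - prim (\<lambda>t. r * gg t) s) x"
        by (rule prim_cong_pw) (use p2 x in auto)
      also have "\<dots> = prim (prim (\<lambda>t. c t * uu a b r t)) x - prim (prim (\<lambda>t. r * gg t)) x"
        by (rule prim_diff[OF pcu prg]) (use x in auto)
      also have "prim (prim (\<lambda>t. r * gg t)) x = r * prim (prim gg) x"
      proof -
        have "prim (\<lambda>t. r * gg t) = (\<lambda>s. r * prim gg s)" by (rule ext) (rule prim_cmult)
        hence "prim (prim (\<lambda>t. r * gg t)) x = prim (\<lambda>s. r * prim gg s) x" by simp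
        thus ?thesis by (simp add: prim_cmult)
      qed
      finally show ?thesis unfolding Top_def by simp
    qed
    have pu1: "prim (uu1 a b r) x = b * (x + pi) + prim (prim (uu2 a b r)) x"
    proof -
      have pi2: "integrable S1 (prim (uu2 a b r))" by (rule integrable_S1_cont[OF prim_cont[OF uu2i]])
      have "prim (uu1 a b r) x = prim (\<lambda>s. b) x + prim (prim (uu2 a b r)) x"
        unfolding uu1_def by (rule prim_add) (use pi2 x in auto)
      thus ?thesis using x by (simp add: prim_const)
    qed
    have "uu a b r x = a * U1 x + b * U2 x + r * U0 x" unfolding uu_def ..
    also have "\<dots> = a + b * (x + pi) + r * h0 x + Top c (uu a b r) x"
      unfolding Tuu[OF x] using U1f[OF x] U2f[OF x] U0f[OF x] unfolding w1_def w2_def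
      by (simp add: algebra_simps)
    also have "\<dots> = a + prim (uu1 a b r) x"
      unfolding pu1 pp2 h0_def by simp
    finally show ?thesis .
  qed
  \<comment> \<open>affine dependence of the periodicity defects\<close>
  define \<alpha>1 where "\<alpha>1 = (\<integral>x. c x * U1 x \<partial>S1)"
  define \<beta>1 where "\<beta>1 = (\<integral>x. c x * U2 x \<partial>S1)"
  define \<gamma>1 where "\<gamma>1 = (\<integral>x. c x * U0 x - gg x \<partial>S1)"
  define \<alpha>2 where "\<alpha>2 = (\<integral>x. prim (\<lambda>t. c t * U1 t) x \<partial>S1)"
  define \<beta>2 where "\<beta>2 = 2*pi + (\<integral>x. prim (\<lambda>t. c t * U2 t) x \<partial>S1)"
  define \<gamma>2 where "\<gamma>2 = (\<integral>x. prim (\<lambda>t. c t * U0 t - gg t) x \<partial>S1)"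
  have cU1: "integrable S1 (\<lambda>t. c t * U1 t)" by (rule integrable_S1_mult_cont[OF ci U1c])
  have cU2: "integrable S1 (\<lambda>t. c t * U2 t)" by (rule integrable_S1_mult_cont[OF ci U2c])
  have cU0: "integrable S1 (\<lambda>t. c t * U0 t)" by (rule integrable_S1_mult_cont[OF ci U0c])
  have cU0g: "integrable S1 (\<lambda>t. c t * U0 t - gg t)" using cU0 ggi by simp
  have pcU1: "integrable S1 (prim (\<lambda>t. c t * U1 t))" by (rule integrable_S1_cont[OF prim_cont[OF cU1]])
  have pcU2: "integrable S1 (prim (\<lambda>t. c t * U2 t))" by (rule integrable_S1_cont[OF prim_cont[OF cU2]])
  have pcU0: "integrable S1 (prim (\<lambda>t. c t * U0 t - gg t))" by (rule integrable_S1_cont[OF prim_cont[OF cU0g]])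
  have uu2eq: "uu2 a b r x = a * (c x * U1 x) + b * (c x * U2 x) + r * (c x * U0 x - gg x)" for a b r x
    unfolding uu2_def uu_def by (simp add: algebra_simps)
  have I1: "(\<integral>x. uu2 a b r x \<partial>S1) = a * \<alpha>1 + b * \<beta>1 + r * \<gamma>1" for a b r
    unfolding uu2eq \<alpha>1_def \<beta>1_def \<gamma>1_def using cU1 cU2 cU0g by simp
  have puu2: "prim (uu2 a b r) x = a * prim (\<lambda>t. c t * U1 t) x + b * prim (\<lambda>t. c t * U2 t) x
                                 + r * prim (\<lambda>t. c t * U0 t - gg t) x" if x: "x \<le> pi" for a b r x
  proof -
    have "prim (uu2 a b r) x = prim (\<lambda>t. a * (c t * U1 t) + b * (c t * U2 t) + r * (c t * U0 t - gg t)) x"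
      unfolding uu2eq ..
    also have "\<dots> = prim (\<lambda>t. a * (c t * U1 t) + b * (c t * U2 t)) x + prim (\<lambda>t. r * (c t * U0 t - gg t)) x"
      by (rule prim_add) (use cU1 cU2 cU0g x in auto)
    also have "prim (\<lambda>t. a * (c t * U1 t) + b * (c t * U2 t)) x
               = prim (\<lambda>t. a * (c t * U1 t)) x + prim (\<lambda>t. b * (c t * U2 t)) x"
      by (rule prim_add) (use cU1 cU2 x in auto)
    finally show ?thesis by (simp add: prim_cmult)
  qed
  have I2: "(\<integral>x. uu1 a b r x \<partial>S1) = a * \<alpha>2 + b * \<beta>2 + r * \<gamma>2" for a b r
  proof -
    have "(\<integral>x. uu1 a b r x \<partial>S1) = (\<integral>x. b + (a * prim (\<lambda>t. c t * U1 t) x + b * prim (\<lambda>t. c t * U2 t) x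
                                 + r * prim (\<lambda>t. c t * U0 t - gg t) x) \<partial>S1)"
      by (rule Bochner_Integration.integral_cong) (auto simp: uu1_def puu2)
    also have "\<dots> = a * \<alpha>2 + b * \<beta>2 + r * \<gamma>2"
      unfolding \<alpha>2_def \<beta>2_def \<gamma>2_def using pcU1 pcU2 pcU0 by (simp add: algebra_simps)
    finally show ?thesis .
  qed
  have W: "weak_deriv (uu a b r) (uu1 a b r) \<and> weak_deriv (uu1 a b r) (uu2 a b r)"
    if d1: "(\<integral>x. uu2 a b r x \<partial>S1) = 0" and d2: "(\<integral>x. uu1 a b r x \<partial>S1) = 0" for a b r
  proof
    show "weak_deriv (uu a b r) (uu1 a b r)"
      by (rule weak_deriv_of_prim[OF uu1i d2 uurep])
    show "weak_deriv (uu1 a b r) (uu2 a b r)"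
      by (rule weak_deriv_of_prim[OF uu2i d1]) (simp add: uu1_def)
  qed
  have Lopeq: "- (\<epsilon>^2) * uu2 a b r x + V x * uu a b r x = r * g x" for a b r x
    unfolding uu2_def c_def gg_def using e2 by (simp add: field_simps)
  have ker2: "\<exists>a b. (a \<noteq> 0 \<or> b \<noteq> 0) \<and> a * \<alpha>1 + b * \<beta>1 = 0 \<and> a * \<alpha>2 + b * \<beta>2 = 0"
    if det: "\<alpha>1 * \<beta>2 - \<beta>1 * \<alpha>2 = 0"
  proof (cases "\<alpha>1 \<noteq> 0 \<or> \<beta>1 \<noteq> 0")
    case True
    thus ?thesis using det by (intro exI[of _ "\<beta>1"] exI[of _ "- \<alpha>1"]) (auto simp: algebra_simps)
  next
    case False
    show ?thesis
    proof (cases "\<alpha>2 \<noteq> 0 \<or> \<beta>2 \<noteq> 0")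
      case True
      thus ?thesis using False by (intro exI[of _ "\<beta>2"] exI[of _ "- \<alpha>2"]) (auto simp: algebra_simps)
    next
      case False2: False
      thus ?thesis using False by (intro exI[of _ 1] exI[of _ 0]) auto
    qed
  qed
  have det: "\<alpha>1 * \<beta>2 - \<beta>1 * \<alpha>2 \<noteq> 0"
  proof
    assume "\<alpha>1 * \<beta>2 - \<beta>1 * \<alpha>2 = 0"
    then obtain a b where ab: "a \<noteq> 0 \<or> b \<noteq> 0" "a * \<alpha>1 + b * \<beta>1 = 0" "a * \<alpha>2 + b * \<beta>2 = 0"
      using ker2 by blast
    have d1: "(\<integral>x. uu2 a b 0 x \<partial>S1) = 0" using I1[of a b 0] ab by simp
    have d2: "(\<integral>x. uu1 a b 0 x \<partial>S1) = 0" using I2[of a b 0] ab by simp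
    have Wz: "weak_deriv (uu a b 0) (uu1 a b 0)" "weak_deriv (uu1 a b 0) (uu2 a b 0)" using W[OF d1 d2] by auto
    have est: "AE x in S1. \<bar>uu a b 0 x\<bar> \<le> (\<integral>x. \<bar>- (\<epsilon>^2) * uu2 a b 0 x + V x * uu a b 0 x\<bar> \<partial>S1) * (1/(2*pi*m) + 2*pi/\<epsilon>^2)"
      by (rule core_estimate(1)[OF eps m Vm Vlow Vup uui uu1i uu2i Wz])
    have Z: "(\<integral>x. \<bar>- (\<epsilon>^2) * uu2 a b 0 x + V x * uu a b 0 x\<bar> \<partial>S1) = 0"
      by (simp only: Lopeq) simp
    have z0: "AE x in S1. uu a b 0 x = 0"
      using est unfolding Z by (elim eventually_mono) simp
    have z20: "AE x in S1. uu2 a b 0 x = 0"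
      using z0 by (elim eventually_mono) (simp add: uu2_def)
    have pz2: "prim (uu2 a b 0) x = 0" if x: "x \<in> {-pi..pi}" for x
    proof -
      have "prim (uu2 a b 0) x = prim (\<lambda>t. 0) x" by (rule prim_cong[OF uu2i _ z20 x]) simp
      thus ?thesis by (simp add: prim_def)
    qed
    have z1b: "uu1 a b 0 x = b" if "x \<in> {-pi..pi}" for x using pz2[OF that] by (simp add: uu1_def)
    have "(\<integral>x. uu1 a b 0 x \<partial>S1) = (\<integral>x. b \<partial>S1)"
      by (rule Bochner_Integration.integral_cong) (auto simp: z1b)
    hence b0: "b = 0" using d2 by simp
    have za: "uu a b 0 x = a" if x: "x \<in> {-pi..pi}" for x
    proof -
      have "prim (uu1 a b 0) x = prim (\<lambda>s. 0) x" by (rule prim_cong_pw) (use z1b b0 x in auto)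
      thus ?thesis using uurep[OF x, of a b 0] by (simp add: prim_def)
    qed
    have "AE x in S1. a = 0"
    proof (rule eventually_mono[OF eventually_conj[OF z0 AE_space]])
      fix x assume h: "uu a b 0 x = 0 \<and> x \<in> space S1"
      have "uu a b 0 x = a" using h by (intro za) simp
      thus "a = 0" using h by simp
    qed
    hence "a = 0" by (rule AE_S1_const)
    thus False using ab(1) b0 by simp
  qed
  define a where "a = (\<beta>1 * \<gamma>2 - \<beta>2 * \<gamma>1) / (\<alpha>1 * \<beta>2 - \<beta>1 * \<alpha>2)"
  define b where "b = (\<alpha>2 * \<gamma>1 - \<alpha>1 * \<gamma>2) / (\<alpha>1 * \<beta>2 - \<beta>1 * \<alpha>2)"
  define D where "D = \<alpha>1 * \<beta>2 - \<beta>1 * \<alpha>2"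
  have D0: "D \<noteq> 0" using det unfolding D_def .
  have aD: "a * D = \<beta>1 * \<gamma>2 - \<beta>2 * \<gamma>1" unfolding a_def D_def[symmetric] using D0 by simp
  have bD: "b * D = \<alpha>2 * \<gamma>1 - \<alpha>1 * \<gamma>2" unfolding b_def D_def[symmetric] using D0 by simp
  have "(a * \<alpha>1 + b * \<beta>1 + \<gamma>1) * D = \<alpha>1 * (a * D) + \<beta>1 * (b * D) + \<gamma>1 * D"
    by (simp add: algebra_simps)
  also have "\<dots> = 0" by (simp only: aD bD) (simp add: D_def algebra_simps)
  finally have s1: "a * \<alpha>1 + b * \<beta>1 + \<gamma>1 = 0" using D0 by simp
  have "(a * \<alpha>2 + b * \<beta>2 + \<gamma>2) * D = \<alpha>2 * (a * D) + \<beta>2 * (b * D) + \<gamma>2 * D"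
    by (simp add: algebra_simps)
  also have "\<dots> = 0" by (simp only: aD bD) (simp add: D_def algebra_simps)
  finally have s2: "a * \<alpha>2 + b * \<beta>2 + \<gamma>2 = 0" using D0 by simp
  have d1: "(\<integral>x. uu2 a b 1 x \<partial>S1) = 0" using I1[of a b 1] s1 by simp
  have d2: "(\<integral>x. uu1 a b 1 x \<partial>S1) = 0" using I2[of a b 1] s2 by simp
  have Wu: "weak_deriv (uu a b 1) (uu1 a b 1)" "weak_deriv (uu1 a b 1) (uu2 a b 1)" using W[OF d1 d2] by auto
  obtain K1 where K1: "\<And>t. t \<in> {-pi..pi} \<Longrightarrow> \<bar>uu a b 1 t\<bar> \<le> K1" using cont_bounded_I[OF uuc] by blast
  obtain K2 where K2: "\<And>t. t \<in> {-pi..pi} \<Longrightarrow> \<bar>uu1 a b 1 t\<bar> \<le> K2" using cont_bounded_I[OF uu1c] by blast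
  have K10: "K1 \<ge> 0" using K1[of 0] by (smt (verit) atLeastAtMost_iff pi_ge_zero)
  have K20: "K2 \<ge> 0" using K2[of 0] by (smt (verit) atLeastAtMost_iff pi_ge_zero)
  have Lu: "Lp p (uu a b 1)"
    by (rule Lp_bounded(1)[OF p _ K10]) (use uui K1 in \<open>auto intro!: AE_S1_I\<close>)
  have Lu1: "Lp p (uu1 a b 1)"
    by (rule Lp_bounded(1)[OF p _ K20]) (use uu1i K2 in \<open>auto intro!: AE_S1_I\<close>)
  have Lu2: "Lp p (uu2 a b 1)"
  proof (rule Lp_weak_minkowski(1)[OF p g, of _ "1/\<epsilon>^2" "L * K1"])
    show "uu2 a b 1 \<in> borel_measurable S1" using uu2i by simp
    show "1/\<epsilon>^2 \<ge> 0" by simp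
    show "L * K1 \<ge> 0" using L0 K10 by simp
    show "AE x in S1. \<bar>uu2 a b 1 x\<bar> \<le> 1/\<epsilon>^2 * \<bar>g x\<bar> + L * K1"
    proof (rule eventually_mono[OF eventually_conj[OF cb AE_space]])
      fix x assume a: "\<bar>c x\<bar> \<le> L \<and> x \<in> space S1"
      have "\<bar>uu2 a b 1 x\<bar> \<le> \<bar>c x\<bar> * \<bar>uu a b 1 x\<bar> + \<bar>gg x\<bar>"
        unfolding uu2_def by (simp add: abs_mult[symmetric] abs_triangle_ineq4)
      also have "\<bar>c x\<bar> * \<bar>uu a b 1 x\<bar> \<le> L * K1" using a K1[of x] L0 by (intro mult_mono) auto
      also have "\<bar>gg x\<bar> = 1/\<epsilon>^2 * \<bar>g x\<bar>" unfolding gg_def by (simp add: abs_divide)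
      finally show "\<bar>uu2 a b 1 x\<bar> \<le> 1/\<epsilon>^2 * \<bar>g x\<bar> + L * K1" by simp
    qed
  qed
  show ?thesis
  proof (intro exI conjI)
    show "W2p p (uu a b 1) (uu1 a b 1) (uu2 a b 1)"
      unfolding W2p_def using Lu Lu1 Lu2 Wu by simp
    show "AE x in S1. Lop \<epsilon> V (uu a b 1) (uu2 a b 1) x = g x"
    proof (rule AE_I2)
      fix x show "Lop \<epsilon> V (uu a b 1) (uu2 a b 1) x = g x"
        unfolding Lop_def using Lopeq[of a b 1 x] by simp
    qed
  qed
qed




lemma weak_deriv_diff:
  assumes u: "integrable S1 u" and v: "integrable S1 v" and u1: "integrable S1 u1" and v1: "integrable S1 v1"
    and wu: "weak_deriv u u1" and wv: "weak_deriv v v1"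
  shows "weak_deriv (\<lambda>x. u x - v x) (\<lambda>x. u1 x - v1 x)"
  unfolding weak_deriv_def
proof (intro allI impI)
  fix \<phi> assume s: "smooth_periodic \<phi>"
  have a: "integrable S1 (\<lambda>x. u x * deriv \<phi> x)" by (rule integrable_S1_mult_cont[OF u smooth_integrable(4)[OF s]])
  have b: "integrable S1 (\<lambda>x. v x * deriv \<phi> x)" by (rule integrable_S1_mult_cont[OF v smooth_integrable(4)[OF s]])
  have c: "integrable S1 (\<lambda>x. u1 x * \<phi> x)" by (rule integrable_S1_mult_cont[OF u1 smooth_integrable(3)[OF s]])
  have d: "integrable S1 (\<lambda>x. v1 x * \<phi> x)" by (rule integrable_S1_mult_cont[OF v1 smooth_integrable(3)[OF s]])
  have "(\<integral>x. (u x - v x) * deriv \<phi> x \<partial>S1) = (\<integral>x. u x * deriv \<phi> x \<partial>S1) - (\<integral>x. v x * deriv \<phi> x \<partial>S1)"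
    using a b by (simp add: left_diff_distrib)
  also have "\<dots> = - (\<integral>x. u1 x * \<phi> x \<partial>S1) + (\<integral>x. v1 x * \<phi> x \<partial>S1)"
    using wu wv s unfolding weak_deriv_def by simp
  also have "\<dots> = - (\<integral>x. (u1 x - v1 x) * \<phi> x \<partial>S1)"
    using c d by (simp add: left_diff_distrib)
  finally show "(\<integral>x. (u x - v x) * deriv \<phi> x \<partial>S1) = - (\<integral>x. (u1 x - v1 x) * \<phi> x \<partial>S1)" .
qed

lemma uniqueness:
  assumes p: "p > 1" and eps: "\<epsilon> > 0" and m: "m > 0"
    and Vm[measurable]: "V \<in> borel_measurable S1"
    and Vlow: "AE x in S1. V x \<ge> m" and Vup: "AE x in S1. \<bar>V x\<bar> \<le> B"
    and U: "W2p p u u1 u2" and W: "W2p p v v1 v2"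
    and e: "AE x in S1. Lop \<epsilon> V u u2 x = Lop \<epsilon> V v v2 x"
  shows "AE x in S1. u x = v x"
proof -
  have ui: "integrable S1 u" "integrable S1 u1" "integrable S1 u2"
    using U p unfolding W2p_def by (auto intro: Lp_integrable)
  have vi: "integrable S1 v" "integrable S1 v1" "integrable S1 v2"
    using W p unfolding W2p_def by (auto intro: Lp_integrable)
  have w1: "weak_deriv (\<lambda>x. u x - v x) (\<lambda>x. u1 x - v1 x)"
    using U W unfolding W2p_def by (intro weak_deriv_diff ui vi) auto
  have w2: "weak_deriv (\<lambda>x. u1 x - v1 x) (\<lambda>x. u2 x - v2 x)"
    using U W unfolding W2p_def by (intro weak_deriv_diff ui vi) auto
  have est: "AE x in S1. \<bar>u x - v x\<bar> \<le> (\<integral>x. \<bar>- (\<epsilon>^2) * (u2 x - v2 x) + V x * (u x - v x)\<bar> \<partial>S1) * (1/(2*pi*m) + 2*pi/\<epsilon>^2)"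
    by (rule core_estimate(1)[OF eps m Vm Vlow Vup _ _ _ w1 w2]) (use ui vi in auto)
  have um[measurable]: "u \<in> borel_measurable S1" "u2 \<in> borel_measurable S1" using ui by auto
  have vm[measurable]: "v \<in> borel_measurable S1" "v2 \<in> borel_measurable S1" using vi by auto
  have "(\<integral>x. \<bar>- (\<epsilon>^2) * (u2 x - v2 x) + V x * (u x - v x)\<bar> \<partial>S1) = (\<integral>x. 0 \<partial>S1)"
    by (rule integral_cong_AE) (use e in \<open>auto simp: Lop_def algebra_simps elim!: eventually_mono\<close>)
  hence "AE x in S1. \<bar>u x - v x\<bar> \<le> 0" using est by simp
  thus ?thesis by (auto elim!: eventually_mono)
qed

definition Kf :: "real \<Rightarrow> real \<Rightarrow> real \<Rightarrow> real \<Rightarrow> real" where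
  "Kf p m B \<epsilon> = (let q = (2*pi) powr (1/p); Q = 2*pi+1; K0 = 1/(2*pi*m) + 2*pi/\<epsilon>^2 in
     q * Q * K0 + q * Q * (2*pi*B*K0 + 1) / \<epsilon>^2 + 2 * (1 + q * B * Q * K0) / \<epsilon>^2)"

lemma estimate:
  assumes p: "p > 1" and eps: "\<epsilon> > 0" and m: "m > 0"
    and Vm[measurable]: "V \<in> borel_measurable S1"
    and Vlow: "AE x in S1. V x \<ge> m" and Vup: "AE x in S1. \<bar>V x\<bar> \<le> B"
    and U: "W2p p u u1 u2"
  shows "W2p_norm p u u1 u2 \<le> Kf p m B \<epsilon> * Lp_norm p (Lop \<epsilon> V u u2)"
proof -
  have Lu: "Lp p u" "Lp p u1" "Lp p u2" using U unfolding W2p_def by auto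
  have ui: "integrable S1 u" "integrable S1 u1" "integrable S1 u2"
    using Lu p by (auto intro: Lp_integrable)
  have um[measurable]: "u \<in> borel_measurable S1" "u1 \<in> borel_measurable S1" "u2 \<in> borel_measurable S1"
    using ui by auto
  have wd: "weak_deriv u u1" "weak_deriv u1 u2" using U unfolding W2p_def by auto
  have B0: "B \<ge> 0"
    by (rule AE_S1_const) (use Vup in \<open>auto elim!: eventually_mono\<close>)
  define f where "f = Lop \<epsilon> V u u2"
  have fe: "f = (\<lambda>x. - (\<epsilon>^2) * u2 x + V x * u x)" unfolding f_def Lop_def ..
  have fm[measurable]: "f \<in> borel_measurable S1" unfolding fe by measurable
  have Lf: "Lp p f"
  proof (rule Lp_sum_bound[OF p Lu(3) Lu(1) fm, of "\<epsilon>^2" B])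
    show "\<epsilon>^2 \<ge> 0" by simp
    show "B \<ge> 0" by (rule B0)
    show "AE x in S1. \<bar>f x\<bar> \<le> \<epsilon>^2 * \<bar>u2 x\<bar> + B * \<bar>u x\<bar>"
    proof (rule eventually_mono[OF Vup])
      fix x assume v: "\<bar>V x\<bar> \<le> B"
      have "\<bar>f x\<bar> \<le> \<bar>- (\<epsilon>^2) * u2 x\<bar> + \<bar>V x * u x\<bar>" unfolding fe by (rule abs_triangle_ineq)
      also have "\<bar>V x * u x\<bar> \<le> B * \<bar>u x\<bar>" using v by (simp add: abs_mult mult_right_mono)
      finally show "\<bar>f x\<bar> \<le> \<epsilon>^2 * \<bar>u2 x\<bar> + B * \<bar>u x\<bar>" by (simp add: abs_mult)
    qed
  qed
  define N where "N = Lp_norm p f"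
  define F1 where "F1 = (\<integral>x. \<bar>f x\<bar> \<partial>S1)"
  define q where "q = (2*pi) powr (1/p)"
  define Q where "Q = 2*pi+1"
  define K0 where "K0 = 1/(2*pi*m) + 2*pi/\<epsilon>^2"
  have N0: "N \<ge> 0" unfolding N_def by (rule Lp_norm_nonneg)
  have F10: "F1 \<ge> 0" unfolding F1_def by simp
  have FN: "F1 \<le> Q * N" unfolding F1_def Q_def N_def by (rule Lp_L1_bound[OF p Lf])
  have q0: "q \<ge> 0" unfolding q_def by simp
  have Q0: "Q > 0" unfolding Q_def by (simp add: add_pos_pos)
  have K00: "K0 \<ge> 0" unfolding K0_def using m by simp
  have e2: "\<epsilon>^2 > 0" using eps by simp
  have ce1: "AE x in S1. \<bar>u x\<bar> \<le> F1 * K0"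
    using core_estimate(1)[OF eps m Vm Vlow Vup ui wd] unfolding F1_def fe K0_def .
  have ce2: "AE x in S1. \<bar>u1 x\<bar> \<le> (2*pi*B*(F1 * K0) + F1) / \<epsilon>^2"
    using core_estimate(2)[OF eps m Vm Vlow Vup ui wd] unfolding F1_def fe K0_def .
  have n1: "Lp_norm p u \<le> q * (F1 * K0)"
    unfolding q_def by (rule Lp_bounded(2)[OF p um(1) _ ce1]) (use F10 K00 in simp)
  have n2: "Lp_norm p u1 \<le> q * ((2*pi*B*(F1 * K0) + F1) / \<epsilon>^2)"
    unfolding q_def by (rule Lp_bounded(2)[OF p um(2) _ ce2]) (use F10 K00 B0 in simp)
  have ce3: "AE x in S1. \<bar>u2 x\<bar> \<le> 1/\<epsilon>^2 * \<bar>f x\<bar> + B * (F1 * K0) / \<epsilon>^2"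
  proof (rule eventually_mono[OF eventually_conj[OF ce1 Vup]])
    fix x assume a: "\<bar>u x\<bar> \<le> F1 * K0 \<and> \<bar>V x\<bar> \<le> B"
    have "u2 x = (V x * u x - f x) / \<epsilon>^2" unfolding fe using e2 by (simp add: field_simps)
    hence "\<bar>u2 x\<bar> = \<bar>V x * u x - f x\<bar> / \<epsilon>^2" by (simp add: abs_divide)
    also have "\<bar>V x * u x - f x\<bar> \<le> \<bar>V x\<bar> * \<bar>u x\<bar> + \<bar>f x\<bar>"
      by (metis abs_mult abs_triangle_ineq4)
    also have "\<bar>V x\<bar> * \<bar>u x\<bar> \<le> B * (F1 * K0)" using a B0 by (intro mult_mono) auto
    finally show "\<bar>u2 x\<bar> \<le> 1/\<epsilon>^2 * \<bar>f x\<bar> + B * (F1 * K0) / \<epsilon>^2"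
      using e2 by (simp add: divide_right_mono add_divide_distrib)
  qed
  have n3: "Lp_norm p u2 \<le> 2 * (1/\<epsilon>^2 * N + q * (B * (F1 * K0) / \<epsilon>^2))"
    unfolding N_def q_def
    by (rule Lp_weak_minkowski(2)[OF p Lf um(3) _ _ ce3]) (use F10 K00 B0 in auto)
  have a1: "q * (F1 * K0) \<le> q * Q * K0 * N"
  proof -
    have "F1 * K0 \<le> (Q * N) * K0" by (rule mult_right_mono[OF FN K00])
    hence "q * (F1 * K0) \<le> q * ((Q * N) * K0)" by (rule mult_left_mono[OF _ q0])
    thus ?thesis by (simp add: algebra_simps)
  qed
  have a2: "q * ((2*pi*B*(F1 * K0) + F1) / \<epsilon>^2) \<le> q * Q * (2*pi*B*K0 + 1) / \<epsilon>^2 * N"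
  proof -
    have "(2*pi*B*(F1 * K0) + F1) = (2*pi*B*K0 + 1) * F1" by (simp add: algebra_simps)
    also have "\<dots> \<le> (2*pi*B*K0 + 1) * (Q * N)" using FN B0 K00 by (intro mult_left_mono) auto
    finally have "(2*pi*B*(F1 * K0) + F1) / \<epsilon>^2 \<le> (2*pi*B*K0 + 1) * (Q * N) / \<epsilon>^2"
      using e2 by (intro divide_right_mono) auto
    hence "q * ((2*pi*B*(F1 * K0) + F1) / \<epsilon>^2) \<le> q * ((2*pi*B*K0 + 1) * (Q * N) / \<epsilon>^2)"
      using q0 by (intro mult_left_mono) auto
    thus ?thesis by (simp add: algebra_simps)
  qed
  have a3: "2 * (1/\<epsilon>^2 * N + q * (B * (F1 * K0) / \<epsilon>^2)) \<le> 2 * (1 + q * B * Q * K0) / \<epsilon>^2 * N"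
  proof -
    have "B * (F1 * K0) \<le> B * (Q * N * K0)" using FN B0 K00 by (intro mult_left_mono mult_right_mono) auto
    hence "B * (F1 * K0) / \<epsilon>^2 \<le> B * (Q * N * K0) / \<epsilon>^2"
      using e2 by (intro divide_right_mono) auto
    hence "q * (B * (F1 * K0) / \<epsilon>^2) \<le> q * (B * (Q * N * K0) / \<epsilon>^2)"
      by (rule mult_left_mono[OF _ q0])
    hence "2 * (1/\<epsilon>^2 * N + q * (B * (F1 * K0) / \<epsilon>^2)) \<le> 2 * (1/\<epsilon>^2 * N + q * (B * (Q * N * K0) / \<epsilon>^2))"
      by simp
    also have "\<dots> = 2 * (1 + q * B * Q * K0) / \<epsilon>^2 * N" using e2 by (simp add: field_simps)
    finally show ?thesis .
  qed
  have "W2p_norm p u u1 u2 = Lp_norm p u + Lp_norm p u1 + Lp_norm p u2" unfolding W2p_norm_def ..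
  also have "\<dots> \<le> q * Q * K0 * N + q * Q * (2*pi*B*K0 + 1) / \<epsilon>^2 * N + 2 * (1 + q * B * Q * K0) / \<epsilon>^2 * N"
    using n1 n2 n3 a1 a2 a3 by linarith
  also have "\<dots> = Kf p m B \<epsilon> * N"
    unfolding Kf_def q_def Q_def K0_def Let_def by (simp add: algebra_simps)
  finally show ?thesis unfolding N_def f_def .
qed

lemma Kf_small:
  assumes p: "p > 1" and m: "m > 0" and B0: "B \<ge> 0" and eps: "0 < \<epsilon>" "\<epsilon> < 1"
  defines "c1 \<equiv> 1/(2*pi*m) + 2*pi"
  defines "q \<equiv> (2*pi) powr (1/p)"
  defines "Q \<equiv> 2*pi+1"
  shows "Kf p m B \<epsilon> \<le> (q*Q*c1 + q*Q*2*pi*B*c1 + q*Q + 2 + 2*q*B*Q*c1) * \<epsilon> powr (-4)"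
proof -
  define e where "e = 1/\<epsilon>^2"
  define K0 where "K0 = 1/(2*pi*m) + 2*pi/\<epsilon>^2"
  have e1: "e \<ge> 1" unfolding e_def using eps by (simp add: power_le_one)
  have K0e: "K0 \<le> c1 * e"
  proof -
    have "1/(2*pi*m) * 1 \<le> 1/(2*pi*m) * e" by (rule mult_left_mono) (use e1 m in auto)
    hence "1/(2*pi*m) \<le> 1/(2*pi*m) * e" by simp
    thus ?thesis unfolding K0_def c1_def e_def by (simp add: algebra_simps)
  qed
  have K00: "K0 \<ge> 0" unfolding K0_def using m by simp
  have c10: "c1 \<ge> 0" unfolding c1_def using m by simp
  have q0: "q \<ge> 0" unfolding q_def by simp
  have Q0: "Q \<ge> 0" unfolding Q_def by simp
  have ee: "e \<le> e * e" using e1 by simp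
  have K0ee: "K0 * e \<le> c1 * (e * e)" using K0e e1 by (metis mult.assoc mult_right_mono order_trans zero_le_one)
  have K0e2: "K0 \<le> c1 * (e * e)" using K0e ee c10 by (meson mult_left_mono order_trans)
  have pw: "\<epsilon> powr (-4) = e * e"
  proof -
    have "\<epsilon> powr (-4) = inverse (\<epsilon> powr 4)" by (simp add: powr_minus)
    also have "\<epsilon> powr 4 = \<epsilon> ^ 4" using eps by (simp add: powr_numeral)
    finally show ?thesis unfolding e_def by (simp add: field_simps power2_eq_square eval_nat_numeral)
  qed
  have Kfe: "Kf p m B \<epsilon> = q*Q*K0 + q*Q*2*pi*B*(K0*e) + q*Q*e + 2*e + 2*q*B*Q*(K0*e)"
    unfolding Kf_def Let_def q_def Q_def K0_def e_def by (simp add: algebra_simps add_divide_distrib)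
  have t1: "q*Q*K0 \<le> q*Q*c1*(e*e)" using K0e2 q0 Q0 by (simp add: mult.assoc mult_left_mono)
  have t2: "q*Q*2*pi*B*(K0*e) \<le> q*Q*2*pi*B*c1*(e*e)"
  proof -
    have "q*Q*2*pi*B \<ge> 0" using q0 Q0 B0 by simp
    hence "q*Q*2*pi*B*(K0*e) \<le> q*Q*2*pi*B*(c1*(e*e))" using K0ee by (intro mult_left_mono)
    thus ?thesis by (simp add: mult.assoc)
  qed
  have t3: "q*Q*e \<le> q*Q*(e*e)" using ee q0 Q0 by (simp add: mult_left_mono)
  have t4: "2*e \<le> 2*(e*e)" using ee by simp
  have t5: "2*q*B*Q*(K0*e) \<le> 2*q*B*Q*c1*(e*e)"
  proof -
    have "2*q*B*Q \<ge> 0" using q0 Q0 B0 by simp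
    hence "2*q*B*Q*(K0*e) \<le> 2*q*B*Q*(c1*(e*e))" using K0ee by (intro mult_left_mono)
    thus ?thesis by (simp add: mult.assoc)
  qed
  have "Kf p m B \<epsilon> \<le> q*Q*c1*(e*e) + q*Q*2*pi*B*c1*(e*e) + q*Q*(e*e) + 2*(e*e) + 2*q*B*Q*c1*(e*e)"
    unfolding Kfe using t1 t2 t3 t4 t5 by linarith
  also have "\<dots> = (q*Q*c1 + q*Q*2*pi*B*c1 + q*Q + 2 + 2*q*B*Q*c1) * \<epsilon> powr (-4)"
    unfolding pw by (simp add: algebra_simps)
  finally show ?thesis .
qed

theorem proposition4p7:
  fixes p m :: real and V :: "real \<Rightarrow> real"
  assumes "p > 1"
    and "Linf V"
    and "m > 0"
    and "AE x in S1. V x \<ge> m"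
  shows "(\<forall>\<epsilon>>0.
            (\<forall>g. Lp p g \<longrightarrow> (\<exists>u u1 u2. W2p p u u1 u2 \<and> (AE x in S1. Lop \<epsilon> V u u2 x = g x)))
          \<and> (\<forall>u u1 u2 v v1 v2. W2p p u u1 u2 \<and> W2p p v v1 v2 \<and>
                (AE x in S1. Lop \<epsilon> V u u2 x = Lop \<epsilon> V v v2 x) \<longrightarrow> (AE x in S1. u x = v x))
          \<and> (\<exists>K. \<forall>u u1 u2. W2p p u u1 u2 \<longrightarrow> W2p_norm p u u1 u2 \<le> K * Lp_norm p (Lop \<epsilon> V u u2)))
       \<and> (\<exists>C. \<exists>\<epsilon>0>0. \<forall>\<epsilon>. 0 < \<epsilon> \<and> \<epsilon> < \<epsilon>0 \<longrightarrow>
            (\<forall>u u1 u2. W2p p u u1 u2 \<longrightarrow>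
               W2p_norm p u u1 u2 \<le> C * \<epsilon> powr (-4) * Lp_norm p (Lop \<epsilon> V u u2)))"
proof -
  note p = assms(1) and m = assms(3) and Vlow = assms(4)
  have Vm[measurable]: "V \<in> borel_measurable S1" using assms(2) unfolding Linf_def by auto
  obtain B where Vup: "AE x in S1. \<bar>V x\<bar> \<le> B" using assms(2) unfolding Linf_def by auto
  have B0: "B \<ge> 0"
    by (rule AE_S1_const) (use Vup in \<open>auto elim!: eventually_mono\<close>)
  show ?thesis
  proof (rule conjI)
    show "\<forall>\<epsilon>>0.
            (\<forall>g. Lp p g \<longrightarrow> (\<exists>u u1 u2. W2p p u u1 u2 \<and> (AE x in S1. Lop \<epsilon> V u u2 x = g x)))
          \<and> (\<forall>u u1 u2 v v1 v2. W2p p u u1 u2 \<and> W2p p v v1 v2 \<and>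
                (AE x in S1. Lop \<epsilon> V u u2 x = Lop \<epsilon> V v v2 x) \<longrightarrow> (AE x in S1. u x = v x))
          \<and> (\<exists>K. \<forall>u u1 u2. W2p p u u1 u2 \<longrightarrow> W2p_norm p u u1 u2 \<le> K * Lp_norm p (Lop \<epsilon> V u u2))"
      apply (intro allI impI)
      subgoal for \<epsilon>
        using existence[OF p _ m Vm Vlow Vup, of \<epsilon>] uniqueness[OF p _ m Vm Vlow Vup, of \<epsilon>]
          estimate[OF p _ m Vm Vlow Vup, of \<epsilon>] by blast
      done
  next
    define C where "C = (let c1 = 1/(2*pi*m) + 2*pi; q = (2*pi) powr (1/p); Q = 2*pi+1 in
                          q*Q*c1 + q*Q*2*pi*B*c1 + q*Q + 2 + 2*q*B*Q*c1)"
    have main: "W2p_norm p u u1 u2 \<le> C * \<epsilon> powr (-4) * Lp_norm p (Lop \<epsilon> V u u2)"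
      if e: "0 < \<epsilon>" "\<epsilon> < 1" and U: "W2p p u u1 u2" for \<epsilon> :: real and u u1 u2
    proof -
      have "W2p_norm p u u1 u2 \<le> Kf p m B \<epsilon> * Lp_norm p (Lop \<epsilon> V u u2)"
        by (rule estimate[OF p e(1) m Vm Vlow Vup U])
      also have "\<dots> \<le> C * \<epsilon> powr (-4) * Lp_norm p (Lop \<epsilon> V u u2)"
        using Kf_small[OF p m B0 e] Lp_norm_nonneg[of p "Lop \<epsilon> V u u2"]
        unfolding C_def Let_def by (intro mult_right_mono) auto
      finally show ?thesis .
    qed
    show "\<exists>C. \<exists>\<epsilon>0>0. \<forall>\<epsilon>. 0 < \<epsilon> \<and> \<epsilon> < \<epsilon>0 \<longrightarrow>
            (\<forall>u u1 u2. W2p p u u1 u2 \<longrightarrow>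
               W2p_norm p u u1 u2 \<le> C * \<epsilon> powr (-4) * Lp_norm p (Lop \<epsilon> V u u2))"
      using main by (intro exI[of _ C] exI[of _ "1::real"]) auto
  qed
qed


end
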